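(* For integers $1\le\alpha\le\beta\le 2n$ let $A_{\alpha,\beta}$ be the number of arcs of $CP_n$ (of either color) joining points $i$ and $i+k$ for some $i$ and some $k$ with $\alpha\le k\le\beta$. Then, uniformly in $\alpha,\beta$, $$\mathbb{E}[A_{\alpha,\beta}]=O\big(\alpha^{-1/2}n+\beta n e^{-\alpha/16}\big).$$ In particular, if $32\log n\le\alpha$ then $\mathbb{E}[A_{\alpha,\beta}]=O(\alpha^{-1/2}n)$.
   Context: The random Catalan-pair graph $CP_n$: points $1,\dots,2n$ on a line; each of $1,\dots,2n-1$ is colored red/blue independently and uniformly, and $2n$ is colored so that the number of red points is even; then a uniformly random non-crossing perfect matching (Catalan-arc matching: no $a<b<c<d$ with $\{a,c\},\{b,d\}$ both arcs) is placed independently on the red points and on the blue points; the vertices of $CP_n$ are the $n$ arcs, two adjacent iff their endpoints alternate. *)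

theory Defs
  imports "HOL-Probability.Probability"
begin

definition perfect_matching_on :: "nat set \<Rightarrow> (nat \<times> nat) set \<Rightarrow> bool" where
  "perfect_matching_on S M \<longleftrightarrow>
     (\<forall>(a,b)\<in>M. a < b \<and> a \<in> S \<and> b \<in> S) \<and>
     (\<forall>x\<in>S. \<exists>!p\<in>M. x = fst p \<or> x = snd p)"

definition noncrossing :: "(nat \<times> nat) set \<Rightarrow> bool" where
  "noncrossing M \<longleftrightarrow>
     \<not> (\<exists>a b c d. a < b \<and> b < c \<and> c < d \<and> (a,c) \<in> M \<and> (b,d) \<in> M)"

definition nc_matchings :: "nat set \<Rightarrow> (nat \<times> nat) set set" where
  "nc_matchings S = {M. perfect_matching_on S M \<and> noncrossing M}"

text \<open>Red points: points 1..2n-1 coloured uniformly at random (R0 = the red ones among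
them); point 2n is red iff this makes the number of red points even.\<close>

definition red_set :: "nat \<Rightarrow> nat set \<Rightarrow> nat set" where
  "red_set n R0 = R0 \<union> (if odd (card R0) then {2*n} else {})"

text \<open>The random Catalan-pair graph CP_n, represented by its set of arcs
(the vertices of CP_n); the union of the red and blue matchings.\<close>

definition CP :: "nat \<Rightarrow> (nat \<times> nat) set pmf" where
  "CP n = do {
     R0 \<leftarrow> pmf_of_set (Pow {1..2*n-1});
     let R = red_set n R0;
     let B = {1..2*n} - R;
     MR \<leftarrow> pmf_of_set (nc_matchings R);
     MB \<leftarrow> pmf_of_set (nc_matchings B);
     return_pmf (MR \<union> MB)
   }"

definition A_count :: "nat \<Rightarrow> nat \<Rightarrow> (nat \<times> nat) set \<Rightarrow> real" where
  "A_count \<alpha> \<beta> M = real (card {(i,j)\<in>M. \<alpha> \<le> j - i \<and> j - i \<le> \<beta>})"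

end

theory Submission
  imports Defs "HOL-Computational_Algebra.Formal_Power_Series"
begin

lemma pm_sub: "perfect_matching_on S M \<Longrightarrow> (a,b) \<in> M \<Longrightarrow> a < b \<and> a \<in> S \<and> b \<in> S"
  unfolding perfect_matching_on_def by blast

lemma pm_uniq: "perfect_matching_on S M \<Longrightarrow> x \<in> S \<Longrightarrow> p \<in> M \<Longrightarrow> q \<in> M
   \<Longrightarrow> (x = fst p \<or> x = snd p) \<Longrightarrow> (x = fst q \<or> x = snd q) \<Longrightarrow> p = q"
  unfolding perfect_matching_on_def by metis

lemma pm_ex: "perfect_matching_on S M \<Longrightarrow> x \<in> S \<Longrightarrow> \<exists>p\<in>M. x = fst p \<or> x = snd p"
  unfolding perfect_matching_on_def by metis

lemma nc_finite: "finite S \<Longrightarrow> finite (nc_matchings S)"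
proof -
  assume "finite S"
  have "nc_matchings S \<subseteq> Pow (S \<times> S)"
    unfolding nc_matchings_def using pm_sub by fastforce
  thus ?thesis using \<open>finite S\<close> by (meson finite_Pow_iff finite_SigmaI finite_subset)
qed

definition Inn :: "nat set \<Rightarrow> nat \<Rightarrow> nat \<Rightarrow> nat set" where
  "Inn S i j = {x\<in>S. i < x \<and> x < j}"
definition Out :: "nat set \<Rightarrow> nat \<Rightarrow> nat \<Rightarrow> nat set" where
  "Out S i j = {x\<in>S. x < i \<or> j < x}"

lemma arc_other:
  assumes M: "M \<in> nc_matchings S" and ij: "(i,j) \<in> M" and ab: "(a,b) \<in> M" and ne: "(a,b) \<noteq> (i,j)"
  shows "(a \<in> Inn S i j \<and> b \<in> Inn S i j) \<or> (a \<in> Out S i j \<and> b \<in> Out S i j)"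
proof -
  have pm: "perfect_matching_on S M" and nc: "noncrossing M" using M unfolding nc_matchings_def by auto
  have 1: "a < b" "a \<in> S" "b \<in> S" using pm_sub[OF pm ab] by auto
  have 2: "i < j" "i \<in> S" "j \<in> S" using pm_sub[OF pm ij] by auto
  have "a \<noteq> i" using pm_uniq[OF pm 2(2) ab ij] ne by auto
  moreover have "a \<noteq> j" using pm_uniq[OF pm 2(3) ab ij] ne by auto
  moreover have "b \<noteq> i" using pm_uniq[OF pm 2(2) ab ij] ne by auto
  moreover have "b \<noteq> j" using pm_uniq[OF pm 2(3) ab ij] ne by auto
  moreover have "\<not> (i < a \<and> a < j \<and> j < b)" using nc ij ab unfolding noncrossing_def by blast
  moreover have "\<not> (a < i \<and> i < b \<and> b < j)" using nc ij ab unfolding noncrossing_def by blast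
  ultimately show ?thesis using 1 2 unfolding Inn_def Out_def by auto
qed

lemma restrict_nc:
  assumes M: "M \<in> nc_matchings S" and T: "T \<subseteq> S"
    and cl: "\<forall>x\<in>T. \<forall>p\<in>M. (x = fst p \<or> x = snd p) \<longrightarrow> p \<in> T \<times> T"
  shows "M \<inter> (T \<times> T) \<in> nc_matchings T"
proof -
  have pm: "perfect_matching_on S M" and nc: "noncrossing M" using M unfolding nc_matchings_def by auto
  have 1: "\<forall>(a,b)\<in>M \<inter> (T \<times> T). a < b \<and> a \<in> T \<and> b \<in> T" using pm_sub[OF pm] by auto
  have 2: "\<forall>x\<in>T. \<exists>!p\<in>M \<inter> (T \<times> T). x = fst p \<or> x = snd p"
  proof
    fix x assume x: "x \<in> T"
    obtain p where p: "p \<in> M" "x = fst p \<or> x = snd p" using pm_ex[OF pm] x T by blast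
    have "p \<in> T \<times> T" using cl x p by blast
    thus "\<exists>!p\<in>M \<inter> (T \<times> T). x = fst p \<or> x = snd p"
      using p pm_uniq[OF pm, of x] x T by blast
  qed
  have 3: "noncrossing (M \<inter> (T \<times> T))" using nc unfolding noncrossing_def by blast
  show ?thesis using 1 2 3 unfolding nc_matchings_def perfect_matching_on_def by blast
qed

lemma decomp_bij:
  assumes S: "finite S" and i: "i \<in> S" and j: "j \<in> S" and ij: "i < j"
  shows "bij_betw (\<lambda>M. (M \<inter> (Inn S i j \<times> Inn S i j), M \<inter> (Out S i j \<times> Out S i j)))
           {M\<in>nc_matchings S. (i,j)\<in>M} (nc_matchings (Inn S i j) \<times> nc_matchings (Out S i j))"
proof (rule bij_betw_byWitness[where f'="\<lambda>(A,B). insert (i,j) (A \<union> B)"])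
  let ?I = "Inn S i j" and ?O = "Out S i j"
  show "\<forall>M\<in>{M \<in> nc_matchings S. (i, j) \<in> M}.
       (\<lambda>(A, B). insert (i, j) (A \<union> B)) (M \<inter> (?I \<times> ?I), M \<inter> (?O \<times> ?O)) = M"
  proof
    fix M assume "M \<in> {M \<in> nc_matchings S. (i, j) \<in> M}"
    hence M: "M \<in> nc_matchings S" "(i,j)\<in>M" by auto
    have "\<forall>p\<in>M. p = (i,j) \<or> p \<in> ?I \<times> ?I \<or> p \<in> ?O \<times> ?O"
      using arc_other[OF M] by fast
    then show "(\<lambda>(A, B). insert (i, j) (A \<union> B)) (M \<inter> (?I \<times> ?I), M \<inter> (?O \<times> ?O)) = M"
      using M(2) by auto
  qed
  show "\<forall>a'\<in>nc_matchings ?I \<times> nc_matchings ?O.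
       (\<lambda>M. (M \<inter> (?I \<times> ?I), M \<inter> (?O \<times> ?O))) ((\<lambda>(A, B). insert (i, j) (A \<union> B)) a') = a'"
  proof
    fix x assume "x \<in> nc_matchings ?I \<times> nc_matchings ?O"
    then obtain A B where x: "x = (A,B)" and A: "A \<in> nc_matchings ?I" and B: "B \<in> nc_matchings ?O" by blast
    have As: "A \<subseteq> ?I \<times> ?I" using A pm_sub unfolding nc_matchings_def by fastforce
    have Bs: "B \<subseteq> ?O \<times> ?O" using B pm_sub unfolding nc_matchings_def by fastforce
    have d: "?I \<inter> ?O = {}" "i \<notin> ?I" "i \<notin> ?O" using ij unfolding Inn_def Out_def by auto
    have "insert (i, j) (A \<union> B) \<inter> (?I \<times> ?I) = A" using As Bs d by blast
    moreover have "insert (i, j) (A \<union> B) \<inter> (?O \<times> ?O) = B" using As Bs d by blast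
    ultimately show "(\<lambda>M. (M \<inter> (?I \<times> ?I), M \<inter> (?O \<times> ?O))) ((\<lambda>(A, B). insert (i, j) (A \<union> B)) x) = x"
      using x by simp
  qed
  show "(\<lambda>M. (M \<inter> (?I \<times> ?I), M \<inter> (?O \<times> ?O))) ` {M \<in> nc_matchings S. (i, j) \<in> M}
    \<subseteq> nc_matchings ?I \<times> nc_matchings ?O"
  proof (rule subsetI)
    fix y assume "y \<in> (\<lambda>M. (M \<inter> (?I \<times> ?I), M \<inter> (?O \<times> ?O))) ` {M \<in> nc_matchings S. (i, j) \<in> M}"
    then obtain M where y: "y = (M \<inter> (?I \<times> ?I), M \<inter> (?O \<times> ?O))" and M: "M \<in> nc_matchings S" "(i,j)\<in>M" by blast
    have pm: "perfect_matching_on S M" and nc: "noncrossing M" using M unfolding nc_matchings_def by auto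
    have sub: "?I \<subseteq> S" "?O \<subseteq> S" unfolding Inn_def Out_def by auto
    have "M \<inter> (?I \<times> ?I) \<in> nc_matchings ?I"
    proof (rule restrict_nc[OF M(1) sub(1)], intro ballI impI)
      fix x p assume x: "x \<in> ?I" and p: "p \<in> M" "x = fst p \<or> x = snd p"
      obtain a b where pab: "p = (a,b)" by fastforce
      have "p \<noteq> (i,j)" using p x ij unfolding Inn_def by auto
      hence "(a \<in> ?I \<and> b \<in> ?I) \<or> (a \<in> ?O \<and> b \<in> ?O)" using arc_other[OF M(1) M(2)] p pab by blast
      thus "p \<in> ?I \<times> ?I" using p pab x unfolding Inn_def Out_def by auto
    qed
    moreover have "M \<inter> (?O \<times> ?O) \<in> nc_matchings ?O"
    proof (rule restrict_nc[OF M(1) sub(2)], intro ballI impI)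
      fix x p assume x: "x \<in> ?O" and p: "p \<in> M" "x = fst p \<or> x = snd p"
      obtain a b where pab: "p = (a,b)" by fastforce
      have "p \<noteq> (i,j)" using p x ij unfolding Out_def by auto
      hence "(a \<in> ?I \<and> b \<in> ?I) \<or> (a \<in> ?O \<and> b \<in> ?O)" using arc_other[OF M(1) M(2)] p pab by blast
      thus "p \<in> ?O \<times> ?O" using p pab x unfolding Inn_def Out_def by auto
    qed
    ultimately show "y \<in> nc_matchings ?I \<times> nc_matchings ?O" using y by simp
  qed
  show "(\<lambda>(A, B). insert (i, j) (A \<union> B)) ` (nc_matchings ?I \<times> nc_matchings ?O)
    \<subseteq> {M \<in> nc_matchings S. (i, j) \<in> M}"
  proof (rule subsetI)
    fix y assume "y \<in> (\<lambda>(A, B). insert (i, j) (A \<union> B)) ` (nc_matchings ?I \<times> nc_matchings ?O)"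
    then obtain z where z: "z \<in> nc_matchings ?I \<times> nc_matchings ?O" "y = (\<lambda>(A, B). insert (i, j) (A \<union> B)) z"
      by (rule imageE)
    obtain A B where zAB: "z = (A,B)" by fastforce
    have y: "y = insert (i, j) (A \<union> B)" and A: "A \<in> nc_matchings ?I" and B: "B \<in> nc_matchings ?O"
      using z zAB by auto
    have pA: "perfect_matching_on ?I A" "noncrossing A" using A unfolding nc_matchings_def by auto
    have pB: "perfect_matching_on ?O B" "noncrossing B" using B unfolding nc_matchings_def by auto
    have As: "a < b \<and> i < a \<and> b < j \<and> a \<in> S \<and> b \<in> S" if "(a,b)\<in>A" for a b
      using pm_sub[OF pA(1) that] unfolding Inn_def by auto
    have Bs: "a < b \<and> (a < i \<or> j < a) \<and> (b < i \<or> j < b) \<and> a \<in> S \<and> b \<in> S" if "(a,b)\<in>B" for a b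
      using pm_sub[OF pB(1) that] unfolding Out_def by auto
    let ?M = "insert (i, j) (A \<union> B)"
    have ijM: "(i,j) \<in> ?M" by simp
    have pm1: "\<forall>(a,b)\<in>?M. a < b \<and> a \<in> S \<and> b \<in> S"
    proof (intro ballI, clarify)
      fix a b assume "(a,b) \<in> ?M"
      then consider "(a,b) = (i,j)" | "(a,b) \<in> A" | "(a,b) \<in> B" by blast
      then show "a < b \<and> a \<in> S \<and> b \<in> S"
      proof cases
        case 1 then show ?thesis using ij i j by simp
      next
        case 2 then show ?thesis using As[of a b] by simp
      next
        case 3 then show ?thesis using Bs[of a b] by simp
      qed
    qed
    have pm2: "\<exists>!p. p \<in> ?M \<and> (x = fst p \<or> x = snd p)" if xS: "x \<in> S" for x
    proof -
      have "x = i \<or> x = j \<or> x \<in> ?I \<or> x \<in> ?O" using xS ij unfolding Inn_def Out_def by auto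
      then consider "x = i" | "x = j" | "x \<in> ?I" | "x \<in> ?O" by blast
      then show ?thesis
      proof cases
        case 1
        have "q = (i,j)" if "q \<in> ?M" "x = fst q \<or> x = snd q" for q
        proof -
          obtain a b where q: "q = (a,b)" by fastforce
          have "(a,b) = (i,j) \<or> (a,b) \<in> A \<or> (a,b) \<in> B" using that q by blast
          thus ?thesis using that q 1 As[of a b] Bs[of a b] ij by force
        qed
        then show ?thesis using 1 ijM by (intro ex1I[of _ "(i,j)"]) auto
      next
        case 2
        have "q = (i,j)" if "q \<in> ?M" "x = fst q \<or> x = snd q" for q
        proof -
          obtain a b where q: "q = (a,b)" by fastforce
          have "(a,b) = (i,j) \<or> (a,b) \<in> A \<or> (a,b) \<in> B" using that q by blast
          thus ?thesis using that q 2 As[of a b] Bs[of a b] ij by force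
        qed
        then show ?thesis using 2 ijM by (intro ex1I[of _ "(i,j)"]) auto
      next
        case 3
        obtain p where p: "p \<in> A" "x = fst p \<or> x = snd p" using pm_ex[OF pA(1) 3] by blast
        have "q = p" if "q \<in> ?M" "x = fst q \<or> x = snd q" for q
        proof -
          obtain a b where q: "q = (a,b)" by fastforce
          have "(a,b) = (i,j) \<or> (a,b) \<in> A \<or> (a,b) \<in> B" using that q by blast
          hence "q \<in> A" using that q 3 Bs[of a b] unfolding Inn_def by force
          thus ?thesis using pm_uniq[OF pA(1) 3 _ p(1)] that p by blast
        qed
        then show ?thesis using p by (intro ex1I[of _ p]) auto
      next
        case 4
        obtain p where p: "p \<in> B" "x = fst p \<or> x = snd p" using pm_ex[OF pB(1) 4] by blast
        have "q = p" if "q \<in> ?M" "x = fst q \<or> x = snd q" for q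
        proof -
          obtain a b where q: "q = (a,b)" by fastforce
          have "(a,b) = (i,j) \<or> (a,b) \<in> A \<or> (a,b) \<in> B" using that q by blast
          hence "q \<in> B" using that q 4 As[of a b] ij unfolding Out_def by force
          thus ?thesis using pm_uniq[OF pB(1) 4 _ p(1)] that p by blast
        qed
        then show ?thesis using p by (intro ex1I[of _ p]) auto
      qed
    qed
    have pm: "perfect_matching_on S ?M"
      unfolding perfect_matching_on_def using pm1 pm2 by blast
    have nc: "noncrossing ?M"
      unfolding noncrossing_def
    proof (rule notI, elim exE conjE)
      fix a b c d assume o: "a < b" "b < c" "c < d" and ac: "(a,c) \<in> ?M" and bd: "(b,d) \<in> ?M"
      show False
      proof -
        { assume "(a,c) \<in> A" "(b,d) \<in> A" hence False using pA(2) o unfolding noncrossing_def by blast }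
        moreover
        { assume "(a,c) \<in> B" "(b,d) \<in> B" hence False using pB(2) o unfolding noncrossing_def by blast }
        moreover have "(a,c) = (i,j) \<or> (a,c) \<in> A \<or> (a,c) \<in> B" using ac by auto
        moreover have "(b,d) = (i,j) \<or> (b,d) \<in> A \<or> (b,d) \<in> B" using bd by auto
        ultimately show False using o As[of a c] As[of b d] Bs[of a c] Bs[of b d] ij
          by auto
      qed
    qed
    show "y \<in> {M \<in> nc_matchings S. (i, j) \<in> M}" using pm nc ijM y unfolding nc_matchings_def by auto
  qed
qed

fun F :: "nat \<Rightarrow> nat" where
  "F 0 = 1" | "F (Suc 0) = 0" | "F (Suc (Suc k)) = (\<Sum>t\<le>k. F t * F (k - t))"

lemma card_arc:
  assumes S: "finite S" and i: "i \<in> S" and j: "j \<in> S" and ij: "i < j"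
  shows "card {M\<in>nc_matchings S. (i,j)\<in>M} = card (nc_matchings (Inn S i j)) * card (nc_matchings (Out S i j))"
  using bij_betw_same_card[OF decomp_bij[OF assms]] by (simp add: card_cartesian_product)

lemma nc_empty: "nc_matchings {} = {{}}"
proof -
  have "M = {}" if "M \<in> nc_matchings {}" for M
    using that pm_sub unfolding nc_matchings_def by fastforce
  moreover have "{} \<in> nc_matchings {}"
    unfolding nc_matchings_def perfect_matching_on_def noncrossing_def by auto
  ultimately show ?thesis by blast
qed

lemma nc_split:
  assumes S: "finite S" "S \<noteq> {}" and i: "i = Min S"
  shows "nc_matchings S = (\<Union>j\<in>S-{i}. {M\<in>nc_matchings S. (i,j)\<in>M})"
proof
  show "nc_matchings S \<subseteq> (\<Union>j\<in>S-{i}. {M\<in>nc_matchings S. (i,j)\<in>M})"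
  proof
    fix M assume M: "M \<in> nc_matchings S"
    have pm: "perfect_matching_on S M" using M unfolding nc_matchings_def by auto
    have iS: "i \<in> S" using S i by simp
    obtain p where p: "p \<in> M" "i = fst p \<or> i = snd p" using pm_ex[OF pm iS] by blast
    obtain a b where pab: "p = (a,b)" by fastforce
    have ab: "a < b" "a \<in> S" "b \<in> S" using pm_sub[OF pm] p pab by auto
    have "i \<le> a" using ab S i by simp
    hence "a = i" using p pab ab by auto
    thus "M \<in> (\<Union>j\<in>S-{i}. {M\<in>nc_matchings S. (i,j)\<in>M})" using M p pab ab by auto
  qed
qed auto

lemma nc_split_disj:
  assumes "j \<in> S - {i}" "j' \<in> S - {i}" "j \<noteq> j'" "i \<in> S"
  shows "{M\<in>nc_matchings S. (i,j)\<in>M} \<inter> {M\<in>nc_matchings S. (i,j')\<in>M} = {}"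
proof -
  have False if "M \<in> nc_matchings S" "(i,j)\<in>M" "(i,j')\<in>M" for M
  proof -
    have pm: "perfect_matching_on S M" using that unfolding nc_matchings_def by auto
    show False using pm_uniq[OF pm assms(4) that(2) that(3)] assms(3) by auto
  qed
  thus ?thesis by blast
qed

lemma card_split:
  assumes S: "finite S" "S \<noteq> {}" and i: "i = Min S"
  shows "card (nc_matchings S) = (\<Sum>j\<in>S-{i}. card {M\<in>nc_matchings S. (i,j)\<in>M})"
proof -
  have iS: "i \<in> S" using S i by simp
  have "card (nc_matchings S) = card (\<Union>j\<in>S-{i}. {M\<in>nc_matchings S. (i,j)\<in>M})"
    using nc_split[OF assms] by simp
  also have "\<dots> = (\<Sum>j\<in>S-{i}. card {M\<in>nc_matchings S. (i,j)\<in>M})"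
    by (rule card_UN_disjoint) (use S nc_finite nc_split_disj iS in auto)
  finally show ?thesis .
qed

lemma card_In_Out:
  assumes S: "finite S" and i: "i \<in> S" and j: "j \<in> S" and ij: "i < j"
  shows "card S = card (Inn S i j) + card (Out S i j) + 2"
proof -
  have "S = {i} \<union> {j} \<union> Inn S i j \<union> Out S i j" using i j ij unfolding Inn_def Out_def by auto
  moreover have "card ({i} \<union> {j} \<union> Inn S i j \<union> Out S i j) = card (Inn S i j) + card (Out S i j) + 2"
    using S ij by (subst card_Un_disjoint, (auto simp: Inn_def Out_def)[3])+ auto
  ultimately show ?thesis by simp
qed

lemma In_mono:
  assumes "j \<in> S" "i < j" "j < j'"
  shows "Inn S i j \<subset> Inn S i j'"
  using assms unfolding Inn_def by auto

lemma reindex_In: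
  assumes S: "finite S" "S \<noteq> {}" and i: "i = Min S"
  shows "(\<Sum>j\<in>S-{i}. g (card (Inn S i j))) = (\<Sum>t<card S - 1. g t)"
proof -
  let ?h = "\<lambda>j. card (Inn S i j)"
  have iS: "i \<in> S" using S i by simp
  have gt: "i < j" if "j \<in> S - {i}" for j using that S i
    by (metis DiffE Min_le le_neq_implies_less singletonI)
  have fin: "finite (Inn S i j)" for j using S unfolding Inn_def by auto
  have inj: "inj_on ?h (S - {i})"
  proof (rule inj_onI, rule ccontr)
    fix j j' assume j: "j \<in> S - {i}" and j': "j' \<in> S - {i}" and eq: "?h j = ?h j'" and ne: "j \<noteq> j'"
    show False
    proof (cases "j < j'")
      case True
      have "?h j < ?h j'" using psubset_card_mono[OF fin In_mono[of j S i j']] True j gt[OF j] by auto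
      thus False using eq by simp
    next
      case False
      hence "j' < j" using ne by simp
      have "?h j' < ?h j" using psubset_card_mono[OF fin In_mono[of j' S i j]] \<open>j' < j\<close> j' gt[OF j'] by auto
      thus False using eq by simp
    qed
  qed
  have sub: "?h ` (S - {i}) \<subseteq> {..<card S - 1}"
  proof
    fix t assume "t \<in> ?h ` (S - {i})"
    then obtain j where j: "j \<in> S - {i}" "t = ?h j" by blast
    have "card S = card (Inn S i j) + card (Out S i j) + 2" using card_In_Out[OF S(1) iS _ gt[OF j(1)]] j by auto
    thus "t \<in> {..<card S - 1}" using j by auto
  qed
  have eq: "?h ` (S - {i}) = {..<card S - 1}"
  proof (rule card_subset_eq[OF _ sub])
    show "finite {..<card S - 1}" by simp
    show "card (?h ` (S - {i})) = card {..<card S - 1}"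
      using card_image[OF inj] iS S by (simp add: card_Diff_singleton)
  qed
  have "(\<Sum>t<card S - 1. g t) = (\<Sum>t\<in>?h ` (S - {i}). g t)" using eq by simp
  also have "\<dots> = (\<Sum>j\<in>S-{i}. g (?h j))" by (rule sum.reindex[OF inj, unfolded comp_def])
  finally show ?thesis by simp
qed

lemma card_nc: "finite S \<Longrightarrow> card (nc_matchings S) = F (card S)"
proof (induction "card S" arbitrary: S rule: less_induct)
  case less
  show ?case
  proof (cases "S = {}")
    case True then show ?thesis by (simp add: nc_empty)
  next
    case False
    define i where "i = Min S"
    have iS: "i \<in> S" using False less.prems i_def by simp
    have gt: "i < j" if "j \<in> S - {i}" for j using that less.prems i_def
      by (metis DiffE Min_le le_neq_implies_less singletonI)
    have "card (nc_matchings S) = (\<Sum>j\<in>S-{i}. card {M\<in>nc_matchings S. (i,j)\<in>M})"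
      using card_split[OF less.prems False i_def] .
    also have "\<dots> = (\<Sum>j\<in>S-{i}. F (card (Inn S i j)) * F (card S - 2 - card (Inn S i j)))"
    proof (rule sum.cong[OF refl])
      fix j assume j: "j \<in> S - {i}"
      have c: "card S = card (Inn S i j) + card (Out S i j) + 2"
        using card_In_Out[OF less.prems iS _ gt[OF j]] j by auto
      have fI: "finite (Inn S i j)" "finite (Out S i j)" using less.prems unfolding Inn_def Out_def by auto
      have "card (nc_matchings (Inn S i j)) = F (card (Inn S i j))"
        using less.hyps[of "Inn S i j"] c fI by auto
      moreover have "card (nc_matchings (Out S i j)) = F (card (Out S i j))"
        using less.hyps[of "Out S i j"] c fI by auto
      ultimately show "card {M\<in>nc_matchings S. (i,j)\<in>M} = F (card (Inn S i j)) * F (card S - 2 - card (Inn S i j))"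
        using card_arc[OF less.prems iS _ gt[OF j]] j c by auto
    qed
    also have "\<dots> = (\<Sum>t<card S - 1. F t * F (card S - 2 - t))"
      using reindex_In[OF less.prems False i_def, of "\<lambda>t. F t * F (card S - 2 - t)"] by simp
    also have "\<dots> = F (card S)"
    proof -
      have "card S \<ge> 1" using False less.prems by (simp add: Suc_leI card_gt_0_iff)
      then consider "card S = 1" | k where "card S = Suc (Suc k)"
        by (metis One_nat_def Suc_le_D not0_implies_Suc)
      then show ?thesis
      proof cases
        case 1 then show ?thesis by simp
      next
        case 2 then show ?thesis by (simp add: lessThan_Suc_atMost)
      qed
    qed
    finally show ?thesis .
  qed
qed

definition gg :: "nat \<Rightarrow> real" where "gg n = ((1/2::real) gchoose n) * (-4)^n"
definition cc :: "nat \<Rightarrow> real" where "cc s = - gg (Suc s) / 2"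

lemma gg_conv: "(\<Sum>k\<in>{0..n}. gg k * gg (n-k)) = ((1::real) gchoose n) * (-4)^n"
proof -
  have "(\<Sum>k\<in>{0..n}. gg k * gg (n-k)) = (\<Sum>k\<in>{0..n}. (((1/2::real) gchoose k) * ((1/2) gchoose (n-k))) * (-4)^n)"
  proof (rule sum.cong[OF refl])
    fix k assume "k \<in> {0..n}"
    hence "(-4::real)^k * (-4)^(n-k) = (-4)^n" by (simp add: power_add[symmetric])
    show "gg k * gg (n-k) = (((1/2::real) gchoose k) * ((1/2) gchoose (n-k))) * (-4)^n"
    proof -
      have "gg k * gg (n-k) = (((1/2::real) gchoose k) * ((1/2) gchoose (n-k))) * ((-4::real)^k * (-4)^(n-k))"
        unfolding gg_def by (simp only: ac_simps)
      thus ?thesis using \<open>(-4::real)^k * (-4)^(n-k) = (-4)^n\<close> by simp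
    qed
  qed
  also have "\<dots> = (\<Sum>k\<in>{0..n}. ((1/2::real) gchoose k) * ((1/2) gchoose (n-k))) * (-4)^n"
    by (simp add: sum_distrib_right)
  also have "\<dots> = ((1/2 + 1/2::real) gchoose n) * (-4)^n" by (simp only: gbinomial_Vandermonde)
  finally show ?thesis by simp
qed

lemma one_gchoose: "n \<ge> 2 \<Longrightarrow> ((1::real) gchoose n) = 0"
proof -
  assume "n \<ge> 2"
  have "((1::real) gchoose n) = of_nat (1 choose n)" by (metis binomial_gbinomial of_nat_1)
  moreover have "(1 choose n) = 0" using \<open>n \<ge> 2\<close> by (simp add: binomial_eq_0)
  ultimately show ?thesis by simp
qed

lemma gg0: "gg 0 = 1" by (simp add: gg_def)

lemma cc_rec: "cc (Suc s) = (\<Sum>a\<le>s. cc a * cc (s-a))"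
proof -
  have "0 = (\<Sum>k\<in>{0..Suc (Suc s)}. gg k * gg (Suc (Suc s)-k))"
    using gg_conv[of "Suc (Suc s)"] one_gchoose[of "Suc (Suc s)"] by simp
  also have "\<dots> = gg 0 * gg (Suc (Suc s)) + (\<Sum>k\<in>{0..Suc s}. gg (Suc k) * gg (Suc s - k))"
    by (subst sum.atLeast0_atMost_Suc_shift) simp
  also have "(\<Sum>k\<in>{0..Suc s}. gg (Suc k) * gg (Suc s - k)) = (\<Sum>k\<in>{0..s}. gg (Suc k) * gg (Suc s - k)) + gg (Suc (Suc s)) * gg 0"
    by (subst sum.atLeast0_atMost_Suc) simp
  also have "(\<Sum>k\<in>{0..s}. gg (Suc k) * gg (Suc s - k)) = (\<Sum>k\<in>{0..s}. 4 * (cc k * cc (s - k)))"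
  proof (rule sum.cong[OF refl])
    fix k assume "k \<in> {0..s}"
    hence "Suc s - k = Suc (s - k)" by auto
    thus "gg (Suc k) * gg (Suc s - k) = 4 * (cc k * cc (s - k))" unfolding cc_def by simp
  qed
  finally have "0 = 2 * gg (Suc (Suc s)) + 4 * (\<Sum>k\<in>{0..s}. cc k * cc (s - k))"
    by (simp add: gg0 sum_distrib_left)
  hence "(\<Sum>k\<in>{0..s}. cc k * cc (s - k)) = cc (Suc s)" unfolding cc_def by simp
  thus ?thesis by (simp add: atLeast0AtMost)
qed

lemma gg_Suc: "gg (Suc n) = gg n * (4 * real n - 2) / (real n + 1)"
proof -
  have "(1/2::real) * ((1/2) gchoose n) = of_nat n * ((1/2) gchoose n) + of_nat (Suc n) * ((1/2) gchoose (Suc n))"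
    by (rule gbinomial_mult_1)
  hence G: "((1/2::real) gchoose (Suc n)) = (1/2 - real n) * ((1/2) gchoose n) / (real n + 1)"
    by (simp add: field_simps)
  have "gg (Suc n) = ((1/2 - real n) * ((1/2) gchoose n) / (real n + 1)) * ((-4) * (-4)^n)"
    unfolding gg_def G by simp
  also have "\<dots> = gg n * (4 * real n - 2) / (real n + 1)"
    unfolding gg_def by (simp add: field_simps)
  finally show ?thesis .
qed

lemma cc0: "cc 0 = 1" unfolding cc_def gg_def by simp

lemma cc_Suc: "cc (Suc s) = cc s * (4 * real s + 2) / (real s + 2)"
  unfolding cc_def using gg_Suc[of "Suc s"] by (simp add: field_simps)

lemma cc_pos: "cc s > 0"
  by (induction s) (auto simp: cc0 cc_Suc)

lemma F_SS: "F (n+2) = (\<Sum>t\<le>n. F t * F (n-t))"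
  by (simp add: numeral_2_eq_2)

lemma F_odd: "F (2*k+1) = 0"
proof (induction k rule: less_induct)
  case (less k)
  show ?case
  proof (cases k)
    case 0 then show ?thesis by simp
  next
    case (Suc m)
    have odd0: "F t = 0" if "odd t" "t \<le> 2*m+1" for t
    proof -
      obtain a where a: "t = 2*a+1" using \<open>odd t\<close> by (rule oddE)
      have "a < k" using that a Suc by auto
      hence "F (2*a+1) = 0" by (rule less.IH)
      thus ?thesis using a by simp
    qed
    have e1: "2*k+1 = (2*m+1)+2" using Suc by simp
    have "F (2*k+1) = (\<Sum>t\<le>2*m+1. F t * F (2*m+1 - t))" unfolding e1 by (rule F_SS)
    also have "\<dots> = 0"
    proof (rule sum.neutral, rule ballI)
      fix t assume t: "t \<in> {..2*m+1}"
      show "F t * F (2*m+1 - t) = 0"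
      proof (cases "odd t")
        case True then show ?thesis using odd0 t by auto
      next
        case False
        hence "odd (2*m+1-t)" using t by auto
        then show ?thesis using odd0[of "2*m+1-t"] by auto
      qed
    qed
    finally show ?thesis .
  qed
qed

lemma F_odd': "odd t \<Longrightarrow> F t = 0"
  using F_odd by (metis oddE)

lemma sum_even_part:
  fixes f :: "nat \<Rightarrow> real"
  assumes "\<And>t. odd t \<Longrightarrow> f t = 0"
  shows "(\<Sum>t\<le>2*m. f t) = (\<Sum>a\<le>m. f (2*a))"
proof -
  have "(\<Sum>t\<le>2*m. f t) = (\<Sum>t\<in>(\<lambda>a. 2*a) ` {..m}. f t)"
  proof (rule sum.mono_neutral_right)
    show "finite {..2*m}" by simp
    show "(\<lambda>a. 2*a) ` {..m} \<subseteq> {..2*m}" by auto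
    show "\<forall>t\<in>{..2 * m} - (\<lambda>a. 2 * a) ` {..m}. f t = 0"
    proof
      fix t assume t: "t \<in> {..2 * m} - (\<lambda>a. 2 * a) ` {..m}"
      have "odd t"
      proof (rule ccontr)
        assume "\<not> odd t"
        then obtain a where "t = 2*a" by (metis evenE)
        thus False using t by auto
      qed
      thus "f t = 0" using assms by blast
    qed
  qed
  also have "\<dots> = (\<Sum>a\<le>m. f (2*a))"
    by (rule sum.reindex[unfolded comp_def]) (auto simp: inj_on_def)
  finally show ?thesis .
qed

lemma F_even: "real (F (2*k)) = cc k"
proof (induction k rule: less_induct)
  case (less k)
  show ?case
  proof (cases k)
    case 0 then show ?thesis by (simp add: cc0)
  next
    case (Suc m)
    have ev: "real (F (2*a)) = cc a" if "a \<le> m" for a using less.IH that Suc by auto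
    have e2: "2*k = (2*m)+2" using Suc by simp
    have Fk: "F (2*k) = (\<Sum>t\<le>2*m. F t * F (2*m - t))" unfolding e2 by (rule F_SS)
    have "real (F (2*k)) = (\<Sum>t\<le>2*m. real (F t) * real (F (2*m - t)))"
      by (simp only: Fk of_nat_sum of_nat_mult)
    also have "\<dots> = (\<Sum>a\<le>m. real (F (2*a)) * real (F (2*m - 2*a)))"
      by (rule sum_even_part) (simp add: F_odd')
    also have "\<dots> = (\<Sum>a\<le>m. cc a * cc (m - a))"
    proof (rule sum.cong[OF refl])
      fix a assume "a \<in> {..m}"
      hence "2*m - 2*a = 2*(m-a)" "a \<le> m" by auto
      thus "real (F (2*a)) * real (F (2*m - 2*a)) = cc a * cc (m - a)" using ev[of a] ev[of "m-a"] by simp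
    qed
    also have "\<dots> = cc k" using cc_rec[of m] Suc by simp
    finally show ?thesis .
  qed
qed

definition pp :: "nat \<Rightarrow> real" where "pp s = (real s + 1) * cc s / 4^s"

lemma pp0: "pp 0 = 1" by (simp add: pp_def cc0)

lemma alg1: "(x::real) \<ge> 0 \<Longrightarrow> P > 0 \<Longrightarrow> (x+2)*(C*(4*x+2)/(x+2))/(4*P) = ((x+1)*C/P)*(2*x+1)/(2*x+2)"
  by (simp add: divide_simps) (simp add: algebra_simps)

lemma pp_Suc: "pp (Suc s) = pp s * (2 * real s + 1) / (2 * real s + 2)"
proof -
  have "pp (Suc s) = (real s + 2) * (cc s * (4 * real s + 2) / (real s + 2)) / (4 * 4^s)"
    unfolding pp_def cc_Suc by (simp add: add.commute)
  also have "\<dots> = pp s * (2 * real s + 1) / (2 * real s + 2)"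
    unfolding pp_def by (rule alg1) auto
  finally show ?thesis .
qed

lemma pp_pos: "pp s > 0" unfolding pp_def using cc_pos[of s] by simp

lemma pp_upper: "(2 * real s + 1) * (pp s)^2 \<le> 1"
proof (induction s)
  case 0 then show ?case by (simp add: pp0)
next
  case (Suc s)
  have "(2 * real (Suc s) + 1) * (pp (Suc s))^2 = ((2*real s+3)*(2*real s+1)/(2*real s+2)^2) * ((2*real s+1) * (pp s)^2)"
    unfolding pp_Suc by (simp add: field_simps power2_eq_square)
  also have "\<dots> \<le> ((2*real s+3)*(2*real s+1)/(2*real s+2)^2) * 1"
    by (rule mult_left_mono[OF Suc]) simp
  also have "\<dots> \<le> 1"
  proof -
    have "(2*real s+3)*(2*real s+1) \<le> (2*real s+2)^2" by (simp add: algebra_simps power2_eq_square)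
    moreover have "(2*real s+2)^2 > 0" by simp
    ultimately show ?thesis by (simp add: divide_le_eq_1)
  qed
  finally show ?case .
qed

lemma pp_lower: "1 \<le> (4 * real s + 1) * (pp s)^2"
proof (induction s)
  case 0 then show ?case by (simp add: pp0)
next
  case (Suc s)
  have h: "4*real s+1 \<noteq> 0" "2*real s+2 \<noteq> 0" by auto
  have "(4 * real (Suc s) + 1) * (pp (Suc s))^2 = ((4*real s+5)*(2*real s+1)^2/((4*real s+1)*(2*real s+2)^2)) * ((4*real s+1) * (pp s)^2)"
    unfolding pp_Suc by (simp add: divide_simps power2_eq_square, (simp add: algebra_simps)?)
  also have "\<dots> \<ge> ((4*real s+5)*(2*real s+1)^2/((4*real s+1)*(2*real s+2)^2)) * 1"
    by (rule mult_left_mono[OF Suc]) simp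
  also have "((4*real s+5)*(2*real s+1)^2/((4*real s+1)*(2*real s+2)^2)) * 1 \<ge> 1"
  proof -
    have "(4*real s+1)*(2*real s+2)^2 \<le> (4*real s+5)*(2*real s+1)^2" by (simp add: algebra_simps power2_eq_square)
    moreover have "(4*real s+1)*(2*real s+2)^2 > 0" by simp
    ultimately show ?thesis by (simp add: le_divide_eq_1)
  qed
  finally show ?case by simp
qed


lemma cc_pp: "cc s = 4^s * pp s / (real s + 1)"
  unfolding pp_def by (simp add: divide_simps, (simp add: algebra_simps)?)

lemma le1_frac: "(a::real) \<le> b \<Longrightarrow> 0 < b \<Longrightarrow> a / b \<le> 1"
  by (simp add: divide_le_eq_1)

lemma R_bound:
  fixes x y :: real assumes x: "0 \<le> x" and xy: "x \<le> y"
  shows "(x+y+2)^2*(4*x+4*y+5)*(2*x+1)^2/(16*(x+1)^2*(y+1)^2*(2*y+1)) \<le> 5"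
proof -
  have e: "(x+y+2)^2*(4*x+4*y+5)*(2*x+1)^2/(16*(x+1)^2*(y+1)^2*(2*y+1))
     = ((x+y+2)^2/(4*(y+1)^2)) * ((4*x+4*y+5)/(5*(2*y+1))) * ((2*x+1)^2/(4*(x+1)^2)) * 5"
    using x xy by (simp add: divide_simps, (simp add: algebra_simps)?)
  have b1: "(x+y+2)^2/(4*(y+1)^2) \<le> 1"
  proof (rule le1_frac)
    have "(x+y+2)^2 \<le> (2*(y+1))^2" by (rule power_mono) (use x xy in auto)
    moreover have "(2*(y+1))^2 = 4*(y+1)^2" by (simp add: power2_eq_square algebra_simps)
    ultimately show "(x+y+2)^2 \<le> 4*(y+1)^2" by linarith
  qed (use x xy in auto)
  have b2: "(4*x+4*y+5)/(5*(2*y+1)) \<le> 1" by (rule le1_frac) (use x xy in auto)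
  have b3: "(2*x+1)^2/(4*(x+1)^2) \<le> 1"
  proof (rule le1_frac)
    have "(2*x+1)^2 \<le> (2*(x+1))^2" by (rule power_mono) (use x xy in auto)
    moreover have "(2*(x+1))^2 = 4*(x+1)^2" by (simp add: power2_eq_square algebra_simps)
    ultimately show "(2*x+1)^2 \<le> 4*(x+1)^2" by linarith
  qed (use x xy in auto)
  have n1: "0 \<le> (x+y+2)^2/(4*(y+1)^2)" "0 \<le> (4*x+4*y+5)/(5*(2*y+1))" "0 \<le> (2*x+1)^2/(4*(x+1)^2)"
    using x xy by auto
  have "((x+y+2)^2/(4*(y+1)^2)) * ((4*x+4*y+5)/(5*(2*y+1))) * ((2*x+1)^2/(4*(x+1)^2)) \<le> 1*1*1"
    by (intro mult_mono b1 b2 b3 n1 mult_nonneg_nonneg) auto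
  thus ?thesis unfolding e by simp
qed

lemma ratio_alg:
  fixes x y pa pb pm :: real
  assumes x: "0 \<le> x" and xy: "x \<le> y" and p: "pa > 0" "pb > 0" "pm > 0"
    and ha: "(2*x+1)*pa^2 \<le> 1" and hb: "(2*y+1)*pb^2 \<le> 1" and hm: "1 \<le> (4*(x+y+1)+1)*pm^2"
  shows "(pa*pb*(x+y+2)/(4*(x+1)*(y+1)*pm))^2 \<le> 5/(2*x+1)^3"
proof -
  let ?R = "(x+y+2)^2*(4*x+4*y+5)*(2*x+1)^2/(16*(x+1)^2*(y+1)^2*(2*y+1))"
  have e: "(pa*pb*(x+y+2)/(4*(x+1)*(y+1)*pm))^2 * (2*x+1)^3
      = ((2*x+1)*pa^2) * ((2*y+1)*pb^2) * (1/((4*(x+y+1)+1)*pm^2)) * ?R"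
    using x xy p by (simp add: divide_simps, (simp add: algebra_simps power2_eq_square power3_eq_cube)?)
  have hm': "1/((4*(x+y+1)+1)*pm^2) \<le> 1" using hm x xy by (simp add: divide_le_eq_1)
  have "((2*x+1)*pa^2) * ((2*y+1)*pb^2) * (1/((4*(x+y+1)+1)*pm^2)) \<le> 1*1*1"
    by (intro mult_mono ha hb hm' mult_nonneg_nonneg) (use x xy in auto)
  moreover have "0 \<le> ?R" using x xy by simp
  ultimately have "(pa*pb*(x+y+2)/(4*(x+1)*(y+1)*pm))^2 * (2*x+1)^3 \<le> 1 * ?R"
    unfolding e by (intro mult_right_mono) auto
  also have "\<dots> \<le> 5" using R_bound[OF x xy] by simp
  finally show ?thesis using x by (simp add: pos_le_divide_eq)
qed

definition psi :: "nat \<Rightarrow> real" where "psi x = 1 / ((real x + 1) * sqrt (real x + 1))"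

lemma psi_nonneg: "psi x \<ge> 0" unfolding psi_def by simp

lemma psi_sq: "(psi x)^2 = 1 / (real x + 1)^3"
  unfolding psi_def by (simp add: power_mult_distrib power_divide power3_eq_cube power2_eq_square)

lemma ratio_cc:
  assumes ab: "a \<le> b"
  shows "cc a * cc b / cc (a+b+1) \<le> 3 * psi (2*a)"
proof -
  let ?m = "a+b+1"
  have q: "cc a * cc b / cc ?m = pp a * pp b * (real a + real b + 2) / (4*(real a+1)*(real b+1)*pp ?m)"
  proof -
    have "(4::real)^?m = 4 * 4^a * 4^b" by (simp add: power_add)
    thus ?thesis unfolding cc_pp using pp_pos[of ?m]
      by (simp add: divide_simps, (simp add: algebra_simps)?)
  qed
  have "(cc a * cc b / cc ?m)^2 \<le> 5/(2*real a+1)^3"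
    unfolding q
    by (rule ratio_alg) (use ab pp_pos pp_upper pp_lower[of ?m] in auto)
  also have "\<dots> \<le> (3 * psi (2*a))^2"
    unfolding power_mult_distrib psi_sq by (simp add: divide_simps)
  finally have "(cc a * cc b / cc ?m)^2 \<le> (3 * psi (2*a))^2" .
  thus ?thesis by (rule power2_le_imp_le) (simp add: psi_nonneg)
qed

declare F.simps(3)[simp del]

lemma psi_mono: "x \<le> y \<Longrightarrow> psi y \<le> psi x"
  unfolding psi_def by (intro divide_left_mono mult_mono) auto

lemma ratio_F: "real (F x) * real (F y) / real (F (x+y+2)) \<le> 3 * (psi x + psi y)"
proof (cases "odd x \<or> odd y")
  case True
  hence "real (F x) * real (F y) = 0" using F_odd' by auto
  hence z: "real (F x) * real (F y) / real (F (x+y+2)) = 0" by simp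
  show ?thesis unfolding z using psi_nonneg[of x] psi_nonneg[of y] by simp
next
  case False
  then obtain a b where ab: "x = 2*a" "y = 2*b" by (auto elim!: evenE)
  have e: "x+y+2 = 2*(a+b+1)" using ab by simp
  have q1: "real (F x) = cc a" "real (F y) = cc b" using F_even ab by auto
  have q2: "real (F (x+y+2)) = cc (a+b+1)" by (simp only: e F_even)
  have q: "real (F x) * real (F y) / real (F (x+y+2)) = cc a * cc b / cc (a+b+1)"
    unfolding q1 q2 by simp
  show ?thesis
  proof (cases "a \<le> b")
    case True
    thus ?thesis unfolding q using ratio_cc[OF True] psi_nonneg[of y] ab by simp
  next
    case False
    hence "b \<le> a" by simp
    from ratio_cc[OF this] have "cc b * cc a / cc (b+a+1) \<le> 3 * psi (2*b)" .
    hence "cc a * cc b / cc (a+b+1) \<le> 3 * psi (2*b)" by (simp add: ac_simps)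
    thus ?thesis unfolding q using psi_nonneg[of x] ab by simp
  qed
qed

lemma amgm_psi:
  fixes t :: real assumes t: "t > 0"
  shows "psi k \<le> (t / (real k + 1)^2 + 1 / (t * (real k + 1))) / 2"
proof -
  define u where "u = real k + 1"
  have u: "u > 0" unfolding u_def by simp
  have su: "sqrt u * sqrt u = u" using u by simp
  have "0 \<le> (t - sqrt u)^2" by simp
  hence "2 * t * sqrt u \<le> t^2 + u" using su by (simp add: power2_eq_square algebra_simps)
  hence "2 * t * sqrt u / (2 * t * u^2) \<le> (t^2 + u) / (2 * t * u^2)"
    using t u by (intro divide_right_mono) auto
  moreover have "2 * t * sqrt u / (2 * t * u^2) = 1 / (u * sqrt u)"
    using t u su by (simp add: divide_simps power2_eq_square, (simp add: algebra_simps)?)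
  moreover have "(t^2 + u) / (2 * t * u^2) = (t / u^2 + 1 / (t * u)) / 2"
    using t u by (simp add: divide_simps power2_eq_square, (simp add: algebra_simps)?)
  ultimately show ?thesis unfolding psi_def u_def[symmetric] by simp
qed

lemma sum_shift_le:
  fixes g :: "nat \<Rightarrow> real" assumes "\<And>k. g k \<ge> 0"
  shows "(\<Sum>k\<le>m. g (Suc k)) \<le> (\<Sum>k\<le>Suc m. g k)"
proof -
  have "(\<Sum>k\<le>Suc m. g k) = g 0 + (\<Sum>k\<le>m. g (Suc k))" by (rule sum.atMost_Suc_shift)
  thus ?thesis using assms[of 0] by simp
qed

lemma binom_inv1: "(\<Sum>k\<le>m. real (m choose k) / (real k + 1)) \<le> 2^(m+1) / (real m + 1)"
proof -
  have "(\<Sum>k\<le>m. real (m choose k) / (real k + 1)) = (\<Sum>k\<le>m. real (Suc m choose Suc k)) / (real m + 1)"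
    unfolding sum_divide_distrib
  proof (rule sum.cong[OF refl])
    fix k
    have "Suc k * (Suc m choose Suc k) = Suc m * (m choose k)"
      using binomial_absorption[of k "Suc m"] by simp
    hence "real (Suc k * (Suc m choose Suc k)) = real (Suc m * (m choose k))" by (simp only:)
    hence "real (Suc k) * real (Suc m choose Suc k) = real (Suc m) * real (m choose k)"
      by (simp only: of_nat_mult)
    thus "real (m choose k) / (real k + 1) = real (Suc m choose Suc k) / (real m + 1)"
      by (simp add: divide_simps, (simp add: algebra_simps)?)
  qed
  also have "\<dots> \<le> (\<Sum>k\<le>Suc m. real (Suc m choose k)) / (real m + 1)"
    by (intro divide_right_mono sum_shift_le[of "\<lambda>k. real (Suc m choose k)"]) auto
  also have "(\<Sum>k\<le>Suc m. real (Suc m choose k)) = 2^(m+1)"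
  proof -
    have "real (\<Sum>k\<le>Suc m. (Suc m choose k)) = real (2^(Suc m))" by (simp only: choose_row_sum)
    thus ?thesis by (simp only: of_nat_sum of_nat_power) simp
  qed
  finally show ?thesis .
qed

lemma alg_binom2:
  fixes c0 c1 c2 k m :: real
  assumes h1: "(k+1)*c1 = (m+1)*c0" and h2: "(k+2)*c2 = (m+2)*c1" and k: "k \<ge> 0" and m: "m \<ge> 0"
  shows "c0/((k+1)*(k+2)) = c2/((m+1)*(m+2))"
proof -
  have "c2*((k+1)*(k+2)) = (k+1)*((k+2)*c2)" by (simp add: algebra_simps)
  also have "\<dots> = (k+1)*((m+2)*c1)" using h2 by simp
  also have "\<dots> = (m+2)*((k+1)*c1)" by (simp add: algebra_simps)
  also have "\<dots> = (m+2)*((m+1)*c0)" using h1 by simp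
  finally have e: "c2*((k+1)*(k+2)) = (m+2)*((m+1)*c0)" .
  have nz: "(k+1)*(k+2) \<noteq> 0" "(m+1)*(m+2) \<noteq> 0" using k m by (auto simp: add_nonneg_eq_0_iff)
  show ?thesis using nz e by (simp add: frac_eq_eq algebra_simps)
qed

lemma alg_amgm2:
  fixes c t u :: real assumes "t > 0" "u > 0"
  shows "c * ((t / u^2 + 1 / (t * u)) / 2) = (t/2) * (c / u^2) + (1/(2*t)) * (c / u)"
  using assms by (simp add: divide_simps, (simp add: algebra_simps)?)

lemma binom_inv2: "(\<Sum>k\<le>m. real (m choose k) / ((real k + 1) * (real k + 2))) \<le> 2^(m+2) / ((real m + 1) * (real m + 2))"
proof -
  have "(\<Sum>k\<le>m. real (m choose k) / ((real k + 1) * (real k + 2)))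
      = (\<Sum>k\<le>m. real (Suc (Suc m) choose Suc (Suc k))) / ((real m + 1) * (real m + 2))"
    unfolding sum_divide_distrib
  proof (rule sum.cong[OF refl])
    fix k
    have "Suc k * (Suc m choose Suc k) = Suc m * (m choose k)"
      using binomial_absorption[of k "Suc m"] by simp
    hence "real (Suc k * (Suc m choose Suc k)) = real (Suc m * (m choose k))" by (simp only:)
    hence h1: "(real k + 1) * real (Suc m choose Suc k) = (real m + 1) * real (m choose k)"
      by (simp only: of_nat_mult of_nat_Suc add.commute)
    have "Suc (Suc k) * (Suc (Suc m) choose Suc (Suc k)) = Suc (Suc m) * (Suc m choose Suc k)"
      using binomial_absorption[of "Suc k" "Suc (Suc m)"] by simp
    hence "real (Suc (Suc k) * (Suc (Suc m) choose Suc (Suc k))) = real (Suc (Suc m) * (Suc m choose Suc k))" by (simp only:)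
    hence h2: "(real k + 2) * real (Suc (Suc m) choose Suc (Suc k)) = (real m + 2) * real (Suc m choose Suc k)"
      by (simp only: of_nat_mult of_nat_Suc add.commute) (simp add: algebra_simps)
    show "real (m choose k) / ((real k + 1) * (real k + 2)) = real (Suc (Suc m) choose Suc (Suc k)) / ((real m + 1) * (real m + 2))"
      by (rule alg_binom2[OF h1 h2]) auto
  qed
  also have "\<dots> \<le> (\<Sum>k\<le>Suc (Suc m). real (Suc (Suc m) choose k)) / ((real m + 1) * (real m + 2))"
  proof (intro divide_right_mono)
    have "(\<Sum>k\<le>m. real (Suc (Suc m) choose Suc (Suc k))) \<le> (\<Sum>k\<le>Suc m. real (Suc (Suc m) choose Suc k))"
      by (rule sum_shift_le[of "\<lambda>k. real (Suc (Suc m) choose Suc k)"]) auto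
    also have "\<dots> \<le> (\<Sum>k\<le>Suc (Suc m). real (Suc (Suc m) choose k))"
      by (rule sum_shift_le[of "\<lambda>k. real (Suc (Suc m) choose k)"]) auto
    finally show "(\<Sum>k\<le>m. real (Suc (Suc m) choose Suc (Suc k))) \<le> (\<Sum>k\<le>Suc (Suc m). real (Suc (Suc m) choose k))" .
  qed auto
  also have "(\<Sum>k\<le>Suc (Suc m). real (Suc (Suc m) choose k)) = 2^(m+2)"
  proof -
    have "real (\<Sum>k\<le>Suc (Suc m). (Suc (Suc m) choose k)) = real (2^(Suc (Suc m)))" by (simp only: choose_row_sum)
    thus ?thesis by (simp only: of_nat_sum of_nat_power) simp
  qed
  finally show ?thesis .
qed

lemma binom_psi: "(\<Sum>k\<le>m. real (m choose k) * psi k) \<le> 5 * 2^m * psi m"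
proof -
  define t where "t = sqrt (real m + 1)"
  have t: "t > 0" unfolding t_def by simp
  have tt: "t * t = real m + 1" unfolding t_def by simp
  have "(\<Sum>k\<le>m. real (m choose k) * psi k)
     \<le> (\<Sum>k\<le>m. real (m choose k) * ((t / (real k + 1)^2 + 1 / (t * (real k + 1))) / 2))"
    by (intro sum_mono mult_left_mono amgm_psi t) auto
  also have "\<dots> = (t/2) * (\<Sum>k\<le>m. real (m choose k) / (real k + 1)^2) + (1/(2*t)) * (\<Sum>k\<le>m. real (m choose k) / (real k + 1))"
  proof -
    have "(\<Sum>k\<le>m. real (m choose k) * ((t / (real k + 1)^2 + 1 / (t * (real k + 1))) / 2))
        = (\<Sum>k\<le>m. (t/2) * (real (m choose k) / (real k + 1)^2) + (1/(2*t)) * (real (m choose k) / (real k + 1)))"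
      by (rule sum.cong[OF refl]) (rule alg_amgm2, use t in auto)
    also have "\<dots> = (t/2) * (\<Sum>k\<le>m. real (m choose k) / (real k + 1)^2) + (1/(2*t)) * (\<Sum>k\<le>m. real (m choose k) / (real k + 1))"
      by (simp only: sum.distrib sum_distrib_left)
    finally show ?thesis .
  qed
  also have "\<dots> \<le> (t/2) * (2 * (2^(m+2) / ((real m + 1) * (real m + 2)))) + (1/(2*t)) * (2^(m+1) / (real m + 1))"
  proof (intro add_mono mult_left_mono)
    have "(\<Sum>k\<le>m. real (m choose k) / (real k + 1)^2) \<le> (\<Sum>k\<le>m. 2 * (real (m choose k) / ((real k + 1) * (real k + 2))))"
    proof (rule sum_mono)
      fix k
      have "1 / (real k + 1)^2 \<le> 2 / ((real k + 1) * (real k + 2))"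
        by (simp add: divide_simps power2_eq_square, (simp add: algebra_simps)?)
      from mult_left_mono[OF this, of "real (m choose k)"]
      show "real (m choose k) / (real k + 1)^2 \<le> 2 * (real (m choose k) / ((real k + 1) * (real k + 2)))"
        by (simp add: ac_simps)
    qed
    also have "\<dots> \<le> 2 * (2^(m+2) / ((real m + 1) * (real m + 2)))"
      unfolding sum_distrib_left[symmetric] using binom_inv2[of m] by simp
    finally show "(\<Sum>k\<le>m. real (m choose k) / (real k + 1)^2) \<le> 2 * (2^(m+2) / ((real m + 1) * (real m + 2)))" .
    show "(\<Sum>k\<le>m. real (m choose k) / (real k + 1)) \<le> 2^(m+1) / (real m + 1)" by (rule binom_inv1)
  qed (use t in auto)
  also have "\<dots> \<le> 5 * 2^m * psi m"
  proof -
    have "(t/2) * (2 * (2^(m+2) / ((real m + 1) * (real m + 2)))) \<le> 4 * 2^m * (t / (real m + 1)^2)"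
      using t by (simp add: divide_simps power2_eq_square, (simp add: algebra_simps)?)
    moreover have "4 * 2^m * (t / (real m + 1)^2) = 4 * 2^m * psi m"
      unfolding psi_def t_def[symmetric] using tt t
      by (simp add: divide_simps power2_eq_square, (simp add: algebra_simps)?)
    moreover have "(1/(2*t)) * (2^(m+1) / (real m + 1)) = 2^m * psi m"
      unfolding psi_def t_def[symmetric] using tt t
      by (simp add: divide_simps power2_eq_square, (simp add: algebra_simps)?)
    moreover have "(5::real) * 2^m * psi m = 4 * 2^m * psi m + 2^m * psi m" by (simp add: algebra_simps)
    ultimately show ?thesis by linarith
  qed
  finally show ?thesis .
qed

lemma sum_Pow_card:
  fixes f :: "nat \<Rightarrow> real"
  assumes X: "finite X"
  shows "(\<Sum>T\<in>Pow X. f (card T)) = (\<Sum>k\<le>card X. real (card X choose k) * f k)"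
proof -
  have "(\<Sum>T\<in>Pow X. f (card T)) = (\<Sum>k\<le>card X. \<Sum>T\<in>{T. T \<in> Pow X \<and> card T = k}. f (card T))"
    by (rule sum.group[symmetric]) (use X card_mono in auto)
  also have "\<dots> = (\<Sum>k\<le>card X. real (card X choose k) * f k)"
  proof (rule sum.cong[OF refl])
    fix k
    have eqset: "{T. T \<in> Pow X \<and> card T = k} = {B. B \<subseteq> X \<and> card B = k}" by auto
    have "(\<Sum>T\<in>{T. T \<in> Pow X \<and> card T = k}. f (card T)) = (\<Sum>T\<in>{T. T \<in> Pow X \<and> card T = k}. f k)"
      by (rule sum.cong) auto
    also have "\<dots> = real (card {T. T \<in> Pow X \<and> card T = k}) * f k" by simp
    also have "\<dots> = real (card X choose k) * f k" unfolding eqset n_subsets[OF X] ..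
    finally show "(\<Sum>T\<in>{T. T \<in> Pow X \<and> card T = k}. f (card T)) = real (card X choose k) * f k" .
  qed
  finally show ?thesis .
qed

lemma sum_Pow_restrict:
  fixes f :: "nat \<Rightarrow> real"
  assumes U: "finite U" and XU: "X \<subseteq> U"
  shows "(\<Sum>R\<in>Pow U. f (card (R \<inter> X))) = 2^(card (U - X)) * (\<Sum>T\<in>Pow X. f (card T))"
proof -
  have "(\<Sum>R\<in>Pow U. f (card (R \<inter> X))) = (\<Sum>p\<in>Pow X \<times> Pow (U - X). f (card (fst p)))"
    by (rule sum.reindex_bij_witness[where i="\<lambda>p. fst p \<union> snd p" and j="\<lambda>R. (R \<inter> X, R - X)"])
       (use XU in force)+
  also have "\<dots> = (\<Sum>T\<in>Pow X. \<Sum>V\<in>Pow (U - X). f (card T))"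
  proof -
    have "(\<Sum>T\<in>Pow X. \<Sum>V\<in>Pow (U - X). f (card T)) = (\<Sum>(T,V)\<in>Pow X \<times> Pow (U - X). f (card T))"
      by (rule sum.cartesian_product)
    also have "\<dots> = (\<Sum>p\<in>Pow X \<times> Pow (U - X). f (card (fst p)))"
      by (simp only: split_def)
    finally show ?thesis ..
  qed
  also have "\<dots> = (\<Sum>T\<in>Pow X. 2^(card (U - X)) * f (card T))"
    using U XU by (simp add: card_Pow finite_subset)
  finally show ?thesis by (simp add: sum_distrib_left)
qed

lemma avg_psi:
  assumes U: "finite U" and XU: "X \<subseteq> U"
  shows "(\<Sum>R\<in>Pow U. psi (card (R \<inter> X))) \<le> 5 * 2^(card U) * psi (card X)"
proof -
  have X: "finite X" using U XU finite_subset by auto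
  have "(\<Sum>R\<in>Pow U. psi (card (R \<inter> X))) = 2^(card (U - X)) * (\<Sum>k\<le>card X. real (card X choose k) * psi k)"
    unfolding sum_Pow_restrict[OF U XU] sum_Pow_card[OF X] ..
  also have "\<dots> \<le> 2^(card (U - X)) * (5 * 2^(card X) * psi (card X))"
    by (intro mult_left_mono binom_psi) auto
  also have "\<dots> = 5 * 2^(card U) * psi (card X)"
  proof -
    have "card U = card (U - X) + card X" using U XU X by (metis card_Diff_subset card_mono le_add_diff_inverse2)
    thus ?thesis by (simp add: power_add)
  qed
  finally show ?thesis .
qed

lemma sum_Pow_compl:
  fixes g :: "nat set \<Rightarrow> real"
  shows "(\<Sum>R\<in>Pow U. g (U - R)) = (\<Sum>R\<in>Pow U. g R)"
  by (rule sum.reindex_bij_witness[where i="\<lambda>R. U - R" and j="\<lambda>R. U - R"]) auto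

lemma tele1:
  fixes x :: real assumes x: "x \<ge> 1"
  shows "1 / ((x+1) * sqrt (x+1)) \<le> 2 / sqrt x - 2 / sqrt (x+1)"
proof -
  define a where "a = sqrt x"
  define b where "b = sqrt (x+1)"
  have a: "a > 0" and b: "b > 0" and ab: "a \<le> b" using x unfolding a_def b_def by auto
  have aa: "a*a = x" and bb: "b*b = x+1" using x unfolding a_def b_def by auto
  have d: "(b - a) * (a + b) = 1" using aa bb by (simp add: algebra_simps)
  have "2 / a - 2 / b = 2 * (b - a) / (a * b)" using a b by (simp add: divide_simps)
  also have "\<dots> = 2 / (a * b * (a + b))"
    using a b d by (simp add: divide_simps, (simp add: algebra_simps)?)
  finally have e: "2 / a - 2 / b = 2 / (a * b * (a + b))" .
  have "a * b * (a + b) \<le> b * b * (2 * b)" using a b ab by (intro mult_mono) auto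
  hence "2 / (b * b * (2 * b)) \<le> 2 / (a * b * (a + b))" using a b by (intro divide_left_mono) auto
  moreover have "2 / (b * b * (2 * b)) = 1 / (b*b*b)" using b by simp
  ultimately have "1 / (b*b*b) \<le> 2 / (a * b * (a + b))" by simp
  moreover have "(x+1) * sqrt (x+1) = b*b*b" using bb unfolding b_def by simp
  ultimately have "1 / ((x+1) * sqrt (x+1)) \<le> 2 / a - 2 / b" using e by simp
  thus ?thesis unfolding a_def b_def .
qed

lemma psi_pred: "d \<ge> 1 \<Longrightarrow> psi (d - 1) = 1 / (real d * sqrt (real d))"
  unfolding psi_def by (simp add: of_nat_diff)

lemma S1_aux:
  assumes "1 \<le> \<alpha>" "\<alpha> \<le> \<beta>"
  shows "(\<Sum>d\<in>{\<alpha>..\<beta>}. psi (d - 1)) \<le> 3 / sqrt (real \<alpha>) - 2 / sqrt (real \<beta>)"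
  using assms(2)
proof (induction \<beta> rule: dec_induct)
  case base
  have "psi (\<alpha> - 1) = 1 / (real \<alpha> * sqrt (real \<alpha>))" using assms psi_pred by simp
  also have "\<dots> \<le> 1 / sqrt (real \<alpha>)" using assms by (simp add: divide_simps)
  finally show ?case by simp
next
  case (step \<beta>)
  have b1: "real \<beta> \<ge> 1" using step assms by simp
  have eq: "(\<Sum>d\<in>{\<alpha>..Suc \<beta>}. psi (d - 1)) = (\<Sum>d\<in>{\<alpha>..\<beta>}. psi (d - 1)) + psi \<beta>"
    using step(1) by (simp add: sum.cl_ivl_Suc)
  have le: "psi \<beta> \<le> 2 / sqrt (real \<beta>) - 2 / sqrt (real (Suc \<beta>))"
    using tele1[OF b1] unfolding psi_def by (simp add: add.commute)
  show ?case using eq le step.IH by linarith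
qed

lemma S1:
  assumes "1 \<le> \<alpha>"
  shows "(\<Sum>d\<in>{\<alpha>..\<beta>}. psi (d - 1)) \<le> 3 / sqrt (real \<alpha>)"
proof (cases "\<alpha> \<le> \<beta>")
  case True
  thus ?thesis using S1_aux[OF assms True] by (smt (verit) divide_nonneg_nonneg real_sqrt_ge_zero of_nat_0_le_iff)
next
  case False
  thus ?thesis by simp
qed

lemma tele2:
  fixes x :: real assumes x: "x \<ge> 0"
  shows "1 / sqrt (x+1) \<le> 2 * sqrt (x+1) - 2 * sqrt x"
proof -
  define a where "a = sqrt x"
  define b where "b = sqrt (x+1)"
  have a: "a \<ge> 0" and b: "b > 0" and ab: "a \<le> b" using x unfolding a_def b_def by auto
  have aa: "a*a = x" and bb: "b*b = x+1" using x unfolding a_def b_def by auto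
  have d: "(b - a) * (a + b) = 1" using aa bb by (simp add: algebra_simps)
  have "b - a = 1 / (a + b)" using d a b by (simp add: divide_simps algebra_simps)
  moreover have "1 / (a + b) \<ge> 1 / (2 * b)" using a b ab by (intro divide_left_mono) auto
  ultimately have "2 * (1 / (2 * b)) \<le> 2 * (b - a)" by simp
  moreover have "2 * (1 / (2 * b)) = 1 / b" using b by simp
  ultimately have "1 / b \<le> 2 * (b - a)" by simp
  thus ?thesis unfolding a_def b_def by (simp add: algebra_simps)
qed

lemma S2: "(\<Sum>e\<in>{1..N}. 1 / sqrt (real e)) \<le> 2 * sqrt (real N)"
proof (induction N)
  case 0 then show ?case by simp
next
  case (Suc N)
  have "(\<Sum>e\<in>{1..Suc N}. 1 / sqrt (real e)) = (\<Sum>e\<in>{1..N}. 1 / sqrt (real e)) + 1 / sqrt (real N + 1)"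
    by (simp add: add.commute)
  also have "1 / sqrt (real N + 1) \<le> 2 * sqrt (real N + 1) - 2 * sqrt (real N)"
    by (rule tele2) simp
  finally show ?case using Suc.IH by (simp add: add.commute)
qed

lemma S3:
  assumes e: "e \<ge> 1"
  shows "real e * psi (e - 2) \<le> 4 / sqrt (real e)"
proof (cases "e \<le> 2")
  case True
  hence "psi (e - 2) = 1" unfolding psi_def by simp
  moreover have "real e * 1 \<le> 4 / sqrt (real e)"
  proof -
    have "real e \<le> 2" using True by simp
    have "sqrt (real e) \<le> 2" using True real_sqrt_le_mono[of "real e" 4] by simp
    have "real e * sqrt (real e) \<le> 2 * 2"
      using \<open>real e \<le> 2\<close> \<open>sqrt (real e) \<le> 2\<close> by (intro mult_mono) auto
    thus ?thesis using e by (simp add: divide_simps)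
  qed
  ultimately show ?thesis by simp
next
  case False
  define c where "c = real e - 1"
  have c: "c \<ge> 1" using False unfolding c_def by simp
  have ps: "psi (e - 2) = 1 / (c * sqrt c)" unfolding psi_def c_def using False by (simp add: of_nat_diff)
  have ec: "real e = c + 1" unfolding c_def by simp
  have s1: "sqrt (c+1) \<le> 2 * sqrt c"
  proof -
    have "sqrt (c+1) \<le> sqrt (4 * c)" using c by (intro real_sqrt_le_mono) simp
    also have "sqrt (4*c) = 2 * sqrt c" by (simp add: real_sqrt_mult)
    finally show ?thesis .
  qed
  have "(c+1) * sqrt (c+1) \<le> (2*c) * (2 * sqrt c)" using c s1 by (intro mult_mono) auto
  hence "(c+1) / (c * sqrt c) \<le> 4 / sqrt (c+1)" using c by (simp add: divide_simps algebra_simps)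
  thus ?thesis unfolding ps ec by simp
qed

definition Pall :: "nat \<Rightarrow> nat \<Rightarrow> nat \<Rightarrow> (nat \<times> nat) set" where
  "Pall n \<alpha> \<beta> = {(i,j). 1 \<le> i \<and> i < j \<and> j \<le> 2*n \<and> \<alpha> \<le> j - i \<and> j - i \<le> \<beta>}"

lemma Pall_finite: "finite (Pall n \<alpha> \<beta>)"
proof -
  have "Pall n \<alpha> \<beta> \<subseteq> {0..2*n} \<times> {0..2*n}" unfolding Pall_def by auto
  thus ?thesis by (rule finite_subset) auto
qed

lemma Pall_slice:
  assumes d: "1 \<le> d"
  shows "{p \<in> Pall n \<alpha> \<beta>. snd p - fst p = d} = (if \<alpha> \<le> d \<and> d \<le> \<beta> then (\<lambda>i. (i, i+d)) ` {1..2*n-d} else {})"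
  using d unfolding Pall_def by (auto simp: image_iff)

lemma card_slice:
  assumes d: "1 \<le> d" "\<alpha> \<le> d" "d \<le> \<beta>"
  shows "card {p \<in> Pall n \<alpha> \<beta>. snd p - fst p = d} = 2*n - d"
proof -
  have "card ((\<lambda>i. (i, i+d)) ` {1..2*n-d}) = card {1..2*n-d}" by (rule card_image) (auto simp: inj_on_def)
  thus ?thesis using Pall_slice[OF d(1), of n \<alpha> \<beta>] d by simp
qed

lemma pair_sum:
  fixes h :: "nat \<Rightarrow> real"
  assumes a: "1 \<le> \<alpha>"
  shows "(\<Sum>p\<in>Pall n \<alpha> \<beta>. h (snd p - fst p)) = (\<Sum>d\<in>{\<alpha>..\<beta>}. real (2*n - d) * h d)"
proof -
  have "(\<Sum>p\<in>Pall n \<alpha> \<beta>. h (snd p - fst p)) = (\<Sum>d\<in>{\<alpha>..\<beta>}. \<Sum>p\<in>{p. p \<in> Pall n \<alpha> \<beta> \<and> snd p - fst p = d}. h (snd p - fst p))"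
    by (rule sum.group[symmetric], rule Pall_finite, simp, auto simp: Pall_def)
  also have "\<dots> = (\<Sum>d\<in>{\<alpha>..\<beta>}. real (2*n - d) * h d)"
  proof (rule sum.cong[OF refl])
    fix d assume d: "d \<in> {\<alpha>..\<beta>}"
    have "(\<Sum>p\<in>{p. p \<in> Pall n \<alpha> \<beta> \<and> snd p - fst p = d}. h (snd p - fst p)) = (\<Sum>p\<in>{p \<in> Pall n \<alpha> \<beta>. snd p - fst p = d}. h d)"
      by (rule sum.cong) auto
    also have "\<dots> = real (2*n - d) * h d" using card_slice[of d \<alpha> \<beta> n] d a by simp
    finally show "(\<Sum>p\<in>{p. p \<in> Pall n \<alpha> \<beta> \<and> snd p - fst p = d}. h (snd p - fst p)) = real (2*n - d) * h d" .
  qed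
  finally show ?thesis .
qed

lemma second_sum:
  assumes ab: "1 \<le> \<alpha>" "\<beta> \<le> 2*n"
  shows "(\<Sum>d\<in>{\<alpha>..\<beta>}. real (2*n - d) * psi (2*n - 2 - d)) \<le> 8 * sqrt (2 * real n)"
proof -
  have "(\<Sum>d\<in>{\<alpha>..\<beta>}. real (2*n - d) * psi (2*n - 2 - d)) \<le> (\<Sum>d\<in>{\<alpha>..\<beta>}. 4 / sqrt (real (2*n - d)))"
  proof (rule sum_mono)
    fix d assume d: "d \<in> {\<alpha>..\<beta>}"
    show "real (2*n - d) * psi (2*n - 2 - d) \<le> 4 / sqrt (real (2*n - d))"
    proof (cases "d < 2*n")
      case True
      have "2*n - 2 - d = (2*n - d) - 2" by simp
      thus ?thesis using S3[of "2*n-d"] True by simp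
    next
      case False
      thus ?thesis by simp
    qed
  qed
  also have "\<dots> \<le> (\<Sum>d\<in>{1..2*n}. 4 / sqrt (real (2*n - d)))"
    by (rule sum_mono2) (use ab in auto)
  also have "\<dots> = (\<Sum>e\<in>{0..<2*n}. 4 / sqrt (real e))"
    by (rule sum.reindex_bij_witness[where i="\<lambda>e. 2*n - e" and j="\<lambda>d. 2*n - d"]) auto
  also have "\<dots> = (\<Sum>e\<in>{0..<2*n} - {0}. 4 / sqrt (real e))"
    by (rule sum.mono_neutral_right) auto
  also have "\<dots> \<le> (\<Sum>e\<in>{1..2*n}. 4 / sqrt (real e))"
    by (rule sum_mono2) auto
  also have "\<dots> = 4 * (\<Sum>e\<in>{1..2*n}. 1 / sqrt (real e))" by (simp add: sum_distrib_left)
  also have "\<dots> \<le> 4 * (2 * sqrt (real (2*n)))" using S2[of "2*n"] by simp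
  finally show ?thesis by simp
qed

lemma Pall_bound:
  assumes a: "1 \<le> \<alpha>" "\<alpha> \<le> \<beta>" "\<beta> \<le> 2*n"
  shows "(\<Sum>p\<in>Pall n \<alpha> \<beta>. psi (snd p - fst p - 1) + psi (2*n - 2 - (snd p - fst p))) \<le> 22 * real n / sqrt (real \<alpha>)"
proof -
  have "(\<Sum>p\<in>Pall n \<alpha> \<beta>. psi (snd p - fst p - 1) + psi (2*n - 2 - (snd p - fst p)))
      = (\<Sum>d\<in>{\<alpha>..\<beta>}. real (2*n - d) * (psi (d - 1) + psi (2*n - 2 - d)))"
    by (rule pair_sum[OF a(1), where h="\<lambda>d. psi (d - 1) + psi (2*n - 2 - d)" and n=n and \<beta>=\<beta>])
  also have "\<dots> = (\<Sum>d\<in>{\<alpha>..\<beta>}. real (2*n - d) * psi (d - 1)) + (\<Sum>d\<in>{\<alpha>..\<beta>}. real (2*n - d) * psi (2*n - 2 - d))"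
    by (simp add: distrib_left sum.distrib)
  also have "\<dots> \<le> 6 * real n / sqrt (real \<alpha>) + 16 * real n / sqrt (real \<alpha>)"
  proof (rule add_mono)
    have "(\<Sum>d\<in>{\<alpha>..\<beta>}. real (2*n - d) * psi (d - 1)) \<le> (\<Sum>d\<in>{\<alpha>..\<beta>}. (2 * real n) * psi (d - 1))"
      by (intro sum_mono mult_right_mono psi_nonneg) auto
    also have "\<dots> = (2 * real n) * (\<Sum>d\<in>{\<alpha>..\<beta>}. psi (d - 1))" by (simp add: sum_distrib_left)
    also have "\<dots> \<le> (2 * real n) * (3 / sqrt (real \<alpha>))" by (intro mult_left_mono S1 a) simp
    also have "\<dots> = 6 * real n / sqrt (real \<alpha>)" by simp
    finally show "(\<Sum>d\<in>{\<alpha>..\<beta>}. real (2*n - d) * psi (d - 1)) \<le> 6 * real n / sqrt (real \<alpha>)" .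
    have s: "sqrt (2 * real n) \<le> 2 * real n / sqrt (real \<alpha>)"
    proof -
      have sa: "sqrt (real \<alpha>) > 0" using a by simp
      have "sqrt (real \<alpha>) \<le> sqrt (2 * real n)" using a by (intro real_sqrt_le_mono) simp
      hence "sqrt (2 * real n) * sqrt (real \<alpha>) \<le> sqrt (2 * real n) * sqrt (2 * real n)"
        by (intro mult_left_mono) auto
      also have "\<dots> = 2 * real n" by simp
      finally show ?thesis using sa by (simp add: divide_simps)
    qed
    have "(\<Sum>d\<in>{\<alpha>..\<beta>}. real (2*n - d) * psi (2*n - 2 - d)) \<le> 8 * sqrt (2 * real n)"
      by (rule second_sum) (use a in auto)
    also have "\<dots> \<le> 8 * (2 * real n / sqrt (real \<alpha>))" using s by simp
    also have "\<dots> = 16 * real n / sqrt (real \<alpha>)" by simp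
    finally show "(\<Sum>d\<in>{\<alpha>..\<beta>}. real (2*n - d) * psi (2*n - 2 - d)) \<le> 16 * real n / sqrt (real \<alpha>)" .
  qed
  also have "\<dots> = 22 * real n / sqrt (real \<alpha>)" by (simp add: field_simps)
  finally show ?thesis .
qed

definition PS :: "nat \<Rightarrow> nat \<Rightarrow> nat set \<Rightarrow> (nat \<times> nat) set" where
  "PS \<alpha> \<beta> S = {p \<in> S \<times> S. fst p < snd p \<and> \<alpha> \<le> snd p - fst p \<and> snd p - fst p \<le> \<beta>}"

lemma PS_finite: "finite S \<Longrightarrow> finite (PS \<alpha> \<beta> S)"
  unfolding PS_def by (rule finite_subset[of _ "S \<times> S"]) auto

lemma A_count_eq:
  assumes S: "finite S" and M: "M \<in> nc_matchings S"
  shows "A_count \<alpha> \<beta> M = (\<Sum>p\<in>PS \<alpha> \<beta> S. of_bool (p \<in> M))"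
proof -
  have pm: "perfect_matching_on S M" using M unfolding nc_matchings_def by auto
  have "{(i,j)\<in>M. \<alpha> \<le> j - i \<and> j - i \<le> \<beta>} = PS \<alpha> \<beta> S \<inter> {p. p \<in> M}"
    unfolding PS_def using pm_sub[OF pm] by auto
  thus ?thesis unfolding A_count_def using PS_finite[OF S] by simp
qed

lemma sum_A:
  assumes S: "finite S"
  shows "(\<Sum>M\<in>nc_matchings S. A_count \<alpha> \<beta> M) = (\<Sum>p\<in>PS \<alpha> \<beta> S. real (card {M\<in>nc_matchings S. p \<in> M}))"
proof -
  have "(\<Sum>M\<in>nc_matchings S. A_count \<alpha> \<beta> M) = (\<Sum>M\<in>nc_matchings S. \<Sum>p\<in>PS \<alpha> \<beta> S. of_bool (p \<in> M))"
    by (rule sum.cong[OF refl]) (rule A_count_eq[OF S])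
  also have "\<dots> = (\<Sum>p\<in>PS \<alpha> \<beta> S. \<Sum>M\<in>nc_matchings S. of_bool (p \<in> M))" by (rule sum.swap)
  also have "\<dots> = (\<Sum>p\<in>PS \<alpha> \<beta> S. real (card {M\<in>nc_matchings S. p \<in> M}))"
  proof (rule sum.cong[OF refl])
    fix p
    have "nc_matchings S \<inter> {M. p \<in> M} = {M\<in>nc_matchings S. p \<in> M}" by auto
    thus "(\<Sum>M\<in>nc_matchings S. of_bool (p \<in> M) :: real) = real (card {M\<in>nc_matchings S. p \<in> M})"
      using nc_finite[OF S] by simp
  qed
  finally show ?thesis .
qed

lemma EA_bound:
  assumes S: "finite S"
  shows "(\<Sum>M\<in>nc_matchings S. A_count \<alpha> \<beta> M) / real (card (nc_matchings S))
     \<le> 3 * (\<Sum>p\<in>PS \<alpha> \<beta> S. psi (card (Inn S (fst p) (snd p))) + psi (card (Out S (fst p) (snd p))))"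
proof -
  have "(\<Sum>M\<in>nc_matchings S. A_count \<alpha> \<beta> M) / real (card (nc_matchings S))
      = (\<Sum>p\<in>PS \<alpha> \<beta> S. real (card {M\<in>nc_matchings S. p \<in> M}) / real (card (nc_matchings S)))"
    unfolding sum_A[OF S] sum_divide_distrib ..
  also have "\<dots> \<le> (\<Sum>p\<in>PS \<alpha> \<beta> S. 3 * (psi (card (Inn S (fst p) (snd p))) + psi (card (Out S (fst p) (snd p)))))"
  proof (rule sum_mono)
    fix p assume p: "p \<in> PS \<alpha> \<beta> S"
    obtain i j where ij: "p = (i,j)" by fastforce
    have h: "i \<in> S" "j \<in> S" "i < j" using p ij unfolding PS_def by auto
    let ?a = "card (Inn S i j)" and ?b = "card (Out S i j)"
    have fI: "finite (Inn S i j)" "finite (Out S i j)" using S unfolding Inn_def Out_def by auto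
    have c1: "card {M\<in>nc_matchings S. (i,j) \<in> M} = F ?a * F ?b"
      using card_arc[OF S h(1) h(2) h(3)] card_nc fI by simp
    have c2: "card (nc_matchings S) = F (?a + ?b + 2)"
      using card_nc[OF S] card_In_Out[OF S h(1) h(2) h(3)] by simp
    have "real (card {M\<in>nc_matchings S. p \<in> M}) / real (card (nc_matchings S))
        = real (F ?a) * real (F ?b) / real (F (?a + ?b + 2))"
      unfolding ij c1 c2 by simp
    also have "\<dots> \<le> 3 * (psi ?a + psi ?b)" by (rule ratio_F)
    finally show "real (card {M\<in>nc_matchings S. p \<in> M}) / real (card (nc_matchings S))
        \<le> 3 * (psi (card (Inn S (fst p) (snd p))) + psi (card (Out S (fst p) (snd p))))"
      using ij by simp
  qed
  also have "\<dots> = 3 * (\<Sum>p\<in>PS \<alpha> \<beta> S. psi (card (Inn S (fst p) (snd p))) + psi (card (Out S (fst p) (snd p))))"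
    by (simp add: sum_distrib_left)
  finally show ?thesis .
qed

definition Xin :: "nat \<times> nat \<Rightarrow> nat set" where "Xin p = {x. fst p < x \<and> x < snd p}"
definition Xout :: "nat \<times> nat \<Rightarrow> nat set" where "Xout p = {x. x < fst p \<or> snd p < x}"

definition GG :: "nat \<Rightarrow> nat \<Rightarrow> nat \<Rightarrow> nat set \<Rightarrow> real" where
  "GG n \<alpha> \<beta> T = (\<Sum>p\<in>Pall n \<alpha> \<beta>. psi (card (T \<inter> Xin p)) + psi (card (T \<inter> Xout p)))"

lemma EA_GG:
  assumes S: "finite S" and S2: "S \<subseteq> {1..2*n}" and T: "T \<subseteq> S"
  shows "(\<Sum>M\<in>nc_matchings S. A_count \<alpha> \<beta> M) / real (card (nc_matchings S)) \<le> 3 * GG n \<alpha> \<beta> T"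
proof -
  have "(\<Sum>p\<in>PS \<alpha> \<beta> S. psi (card (Inn S (fst p) (snd p))) + psi (card (Out S (fst p) (snd p))))
     \<le> (\<Sum>p\<in>PS \<alpha> \<beta> S. psi (card (T \<inter> Xin p)) + psi (card (T \<inter> Xout p)))"
  proof (rule sum_mono)
    fix p
    have "T \<inter> Xin p \<subseteq> Inn S (fst p) (snd p)" "T \<inter> Xout p \<subseteq> Out S (fst p) (snd p)"
      using T unfolding Xin_def Xout_def Inn_def Out_def by auto
    moreover have "finite (Inn S (fst p) (snd p))" "finite (Out S (fst p) (snd p))"
      using S unfolding Inn_def Out_def by auto
    ultimately have "card (T \<inter> Xin p) \<le> card (Inn S (fst p) (snd p))" "card (T \<inter> Xout p) \<le> card (Out S (fst p) (snd p))"
      by (auto intro: card_mono)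
    thus "psi (card (Inn S (fst p) (snd p))) + psi (card (Out S (fst p) (snd p)))
       \<le> psi (card (T \<inter> Xin p)) + psi (card (T \<inter> Xout p))"
      by (intro add_mono psi_mono)
  qed
  also have "\<dots> \<le> GG n \<alpha> \<beta> T" unfolding GG_def
  proof (rule sum_mono2[OF Pall_finite])
    show "PS \<alpha> \<beta> S \<subseteq> Pall n \<alpha> \<beta>" unfolding PS_def Pall_def using S2 by auto
  qed (auto intro: add_nonneg_nonneg psi_nonneg)
  finally show ?thesis using EA_bound[OF S, of \<alpha> \<beta>] by linarith
qed

lemma card_Xin:
  assumes p: "p \<in> Pall n \<alpha> \<beta>"
  shows "snd p - fst p - 1 \<le> card ({1..2*n-1} \<inter> Xin p)"
proof -
  obtain i j where ij: "p = (i,j)" by fastforce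
  have h: "1 \<le> i" "i < j" "j \<le> 2*n" using p ij unfolding Pall_def by auto
  have "{i<..<j} \<subseteq> {1..2*n-1} \<inter> Xin p" using h ij unfolding Xin_def by auto
  hence "card {i<..<j} \<le> card ({1..2*n-1} \<inter> Xin p)" by (intro card_mono) auto
  thus ?thesis using ij by simp
qed

lemma card_Xout:
  assumes p: "p \<in> Pall n \<alpha> \<beta>"
  shows "2*n - 2 - (snd p - fst p) \<le> card ({1..2*n-1} \<inter> Xout p)"
proof -
  obtain i j where ij: "p = (i,j)" by fastforce
  have h: "1 \<le> i" "i < j" "j \<le> 2*n" using p ij unfolding Pall_def by auto
  have "{1..<i} \<union> {j<..2*n-1} \<subseteq> {1..2*n-1} \<inter> Xout p" using h ij unfolding Xout_def by auto
  hence "card ({1..<i} \<union> {j<..2*n-1}) \<le> card ({1..2*n-1} \<inter> Xout p)" by (intro card_mono) auto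
  moreover have "card ({1..<i} \<union> {j<..2*n-1}) = (i - 1) + (2*n - 1 - j)"
    using h by (subst card_Un_disjoint) auto
  moreover have "2*n - 2 - (j - i) \<le> (i - 1) + (2*n - 1 - j)" using h by linarith
  ultimately show ?thesis using ij by simp
qed

lemma GG_avg:
  assumes a: "1 \<le> \<alpha>" "\<alpha> \<le> \<beta>" "\<beta> \<le> 2*n"
  shows "(\<Sum>R0\<in>Pow {1..2*n-1}. GG n \<alpha> \<beta> R0) \<le> 5 * 2^(card {1..2*n-1}) * (22 * real n / sqrt (real \<alpha>))"
proof -
  let ?U = "{1..2*n-1}"
  let ?K = "5 * 2^(card ?U) :: real"
  have "(\<Sum>R0\<in>Pow ?U. GG n \<alpha> \<beta> R0)
      = (\<Sum>p\<in>Pall n \<alpha> \<beta>. (\<Sum>R0\<in>Pow ?U. psi (card (R0 \<inter> (?U \<inter> Xin p)))) + (\<Sum>R0\<in>Pow ?U. psi (card (R0 \<inter> (?U \<inter> Xout p)))))"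
  proof -
    have "(\<Sum>R0\<in>Pow ?U. GG n \<alpha> \<beta> R0) = (\<Sum>p\<in>Pall n \<alpha> \<beta>. \<Sum>R0\<in>Pow ?U. psi (card (R0 \<inter> Xin p)) + psi (card (R0 \<inter> Xout p)))"
      unfolding GG_def by (rule sum.swap)
    also have "\<dots> = (\<Sum>p\<in>Pall n \<alpha> \<beta>. (\<Sum>R0\<in>Pow ?U. psi (card (R0 \<inter> (?U \<inter> Xin p)))) + (\<Sum>R0\<in>Pow ?U. psi (card (R0 \<inter> (?U \<inter> Xout p)))))"
    proof (rule sum.cong[OF refl])
      fix p
      have "(\<Sum>R0\<in>Pow ?U. psi (card (R0 \<inter> Xin p)) + psi (card (R0 \<inter> Xout p)))
          = (\<Sum>R0\<in>Pow ?U. psi (card (R0 \<inter> (?U \<inter> Xin p))) + psi (card (R0 \<inter> (?U \<inter> Xout p))))"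
      proof (rule sum.cong[OF refl])
        fix R0 assume "R0 \<in> Pow ?U"
        hence "R0 \<inter> Xin p = R0 \<inter> (?U \<inter> Xin p)" "R0 \<inter> Xout p = R0 \<inter> (?U \<inter> Xout p)" by auto
        thus "psi (card (R0 \<inter> Xin p)) + psi (card (R0 \<inter> Xout p)) = psi (card (R0 \<inter> (?U \<inter> Xin p))) + psi (card (R0 \<inter> (?U \<inter> Xout p)))"
          by simp
      qed
      thus "(\<Sum>R0\<in>Pow ?U. psi (card (R0 \<inter> Xin p)) + psi (card (R0 \<inter> Xout p)))
          = (\<Sum>R0\<in>Pow ?U. psi (card (R0 \<inter> (?U \<inter> Xin p)))) + (\<Sum>R0\<in>Pow ?U. psi (card (R0 \<inter> (?U \<inter> Xout p))))"
        by (simp add: sum.distrib)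
    qed
    finally show ?thesis .
  qed
  also have "\<dots> \<le> (\<Sum>p\<in>Pall n \<alpha> \<beta>. ?K * (psi (snd p - fst p - 1) + psi (2*n - 2 - (snd p - fst p))))"
  proof (rule sum_mono)
    fix p assume p: "p \<in> Pall n \<alpha> \<beta>"
    have "(\<Sum>R0\<in>Pow ?U. psi (card (R0 \<inter> (?U \<inter> Xin p)))) \<le> ?K * psi (card (?U \<inter> Xin p))"
      by (rule avg_psi) auto
    also have "\<dots> \<le> ?K * psi (snd p - fst p - 1)"
      by (intro mult_left_mono psi_mono card_Xin[OF p]) auto
    finally have 1: "(\<Sum>R0\<in>Pow ?U. psi (card (R0 \<inter> (?U \<inter> Xin p)))) \<le> ?K * psi (snd p - fst p - 1)" .
    have "(\<Sum>R0\<in>Pow ?U. psi (card (R0 \<inter> (?U \<inter> Xout p)))) \<le> ?K * psi (card (?U \<inter> Xout p))"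
      by (rule avg_psi) auto
    also have "\<dots> \<le> ?K * psi (2*n - 2 - (snd p - fst p))"
      by (intro mult_left_mono psi_mono card_Xout[OF p]) auto
    finally have 2: "(\<Sum>R0\<in>Pow ?U. psi (card (R0 \<inter> (?U \<inter> Xout p)))) \<le> ?K * psi (2*n - 2 - (snd p - fst p))" .
    show "(\<Sum>R0\<in>Pow ?U. psi (card (R0 \<inter> (?U \<inter> Xin p)))) + (\<Sum>R0\<in>Pow ?U. psi (card (R0 \<inter> (?U \<inter> Xout p))))
        \<le> ?K * (psi (snd p - fst p - 1) + psi (2*n - 2 - (snd p - fst p)))"
      using 1 2 by (simp add: distrib_left)
  qed
  also have "\<dots> = ?K * (\<Sum>p\<in>Pall n \<alpha> \<beta>. psi (snd p - fst p - 1) + psi (2*n - 2 - (snd p - fst p)))"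
    by (simp add: sum_distrib_left)
  also have "\<dots> \<le> ?K * (22 * real n / sqrt (real \<alpha>))"
    by (intro mult_left_mono Pall_bound a) auto
  finally show ?thesis .
qed

definition EA :: "nat \<Rightarrow> nat \<Rightarrow> nat set \<Rightarrow> real" where
  "EA \<alpha> \<beta> S = (\<Sum>M\<in>nc_matchings S. A_count \<alpha> \<beta> M) / real (card (nc_matchings S))"

lemma nc_ne:
  assumes S: "finite S" and ev: "even (card S)"
  shows "nc_matchings S \<noteq> {}"
proof -
  obtain k where k: "card S = 2*k" using ev by (auto elim!: evenE)
  have "real (card (nc_matchings S)) = cc k" using card_nc[OF S] k F_even by simp
  hence "card (nc_matchings S) > 0" using cc_pos[of k] by linarith
  thus ?thesis by auto
qed

lemma red_props:
  assumes R0: "R0 \<subseteq> {1..2*n-1}"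
  shows "finite (red_set n R0)" "red_set n R0 \<subseteq> {1..2*n}" "even (card (red_set n R0))" "R0 \<subseteq> red_set n R0"
proof -
  have fR0: "finite R0" using R0 finite_subset by auto
  have "{1..2*n-1} \<subseteq> {1..2*n}" by auto
  hence s: "R0 \<subseteq> {1..2*n}" using R0 by (rule subset_trans[rotated])
  show "finite (red_set n R0)" unfolding red_set_def using fR0 by simp
  show "R0 \<subseteq> red_set n R0" unfolding red_set_def by auto
  show "red_set n R0 \<subseteq> {1..2*n}"
  proof (cases "odd (card R0)")
    case True
    hence "R0 \<noteq> {}" by auto
    hence n1: "n \<ge> 1" using R0 by auto
    show ?thesis unfolding red_set_def using s n1 True by auto
  next
    case False
    thus ?thesis unfolding red_set_def using s by auto
  qed
  show "even (card (red_set n R0))"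
  proof (cases "odd (card R0)")
    case True
    hence "R0 \<noteq> {}" by auto
    hence "n \<ge> 1" using R0 by auto
    hence "2*n \<notin> R0" using R0 by auto
    hence "card (red_set n R0) = Suc (card R0)" unfolding red_set_def using True fR0 by simp
    thus ?thesis using True by simp
  next
    case False
    thus ?thesis unfolding red_set_def by simp
  qed
qed

lemma blue_props:
  assumes R0: "R0 \<subseteq> {1..2*n-1}"
  shows "finite ({1..2*n} - red_set n R0)" "{1..2*n} - red_set n R0 \<subseteq> {1..2*n}"
    "even (card ({1..2*n} - red_set n R0))" "{1..2*n-1} - R0 \<subseteq> {1..2*n} - red_set n R0"
    "red_set n R0 \<inter> ({1..2*n} - red_set n R0) = {}"
proof -
  note r = red_props[OF R0]
  show "finite ({1..2*n} - red_set n R0)" by simp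
  show "{1..2*n} - red_set n R0 \<subseteq> {1..2*n}" by auto
  show "red_set n R0 \<inter> ({1..2*n} - red_set n R0) = {}" by auto
  have "card ({1..2*n} - red_set n R0) = 2*n - card (red_set n R0)"
    using r(1,2) by (simp add: card_Diff_subset)
  moreover have "card (red_set n R0) \<le> 2*n" using card_mono[OF _ r(2)] by simp
  ultimately show "even (card ({1..2*n} - red_set n R0))" using r(3) by auto
  show "{1..2*n-1} - R0 \<subseteq> {1..2*n} - red_set n R0"
  proof
    fix x assume x: "x \<in> {1..2*n-1} - R0"
    hence "x \<noteq> 2*n" by auto
    thus "x \<in> {1..2*n} - red_set n R0" using x unfolding red_set_def by auto
  qed
qed

lemma exp_bind_set:
  fixes h :: "'b \<Rightarrow> real"
  assumes "finite A" "A \<noteq> {}" "\<And>a. a \<in> A \<Longrightarrow> finite (set_pmf (f a))"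
  shows "measure_pmf.expectation (pmf_of_set A \<bind> f) h = (\<Sum>a\<in>A. measure_pmf.expectation (f a) h) / real (card A)"
proof -
  have "measure_pmf.expectation (pmf_of_set A \<bind> f) h = (\<Sum>a\<in>A. measure_pmf.expectation (f a) h /\<^sub>R real (card A))"
    by (rule pmf_expectation_bind_pmf_of_set) (use assms in auto)
  also have "\<dots> = (\<Sum>a\<in>A. measure_pmf.expectation (f a) h / real (card A))"
    by (rule sum.cong) (simp_all add: divide_inverse mult.commute)
  also have "\<dots> = (\<Sum>a\<in>A. measure_pmf.expectation (f a) h) / real (card A)"
    by (rule sum_divide_distrib[symmetric])
  finally show ?thesis .
qed

lemma A_count_Un:
  assumes R: "finite R" and B: "finite B" and d: "R \<inter> B = {}"
    and MR: "MR \<in> nc_matchings R" and MB: "MB \<in> nc_matchings B"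
  shows "A_count \<alpha> \<beta> (MR \<union> MB) = A_count \<alpha> \<beta> MR + A_count \<alpha> \<beta> MB"
proof -
  have sR: "MR \<subseteq> R \<times> R" using MR pm_sub unfolding nc_matchings_def by fastforce
  have sB: "MB \<subseteq> B \<times> B" using MB pm_sub unfolding nc_matchings_def by fastforce
  have e: "{(i,j)\<in>MR \<union> MB. \<alpha> \<le> j - i \<and> j - i \<le> \<beta>} = {(i,j)\<in>MR. \<alpha> \<le> j - i \<and> j - i \<le> \<beta>} \<union> {(i,j)\<in>MB. \<alpha> \<le> j - i \<and> j - i \<le> \<beta>}"
    by auto
  have f: "finite {(i,j)\<in>MR. \<alpha> \<le> j - i \<and> j - i \<le> \<beta>}" "finite {(i,j)\<in>MB. \<alpha> \<le> j - i \<and> j - i \<le> \<beta>}"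
    using sR sB R B by (auto intro: finite_subset[of _ "R \<times> R"] finite_subset[of _ "B \<times> B"])
  have "{(i,j)\<in>MR. \<alpha> \<le> j - i \<and> j - i \<le> \<beta>} \<inter> {(i,j)\<in>MB. \<alpha> \<le> j - i \<and> j - i \<le> \<beta>} = {}"
    using sR sB d by blast
  thus ?thesis unfolding A_count_def e using f by (simp add: card_Un_disjoint)
qed

lemma E_inner:
  assumes R: "finite R" "even (card R)" and B: "finite B" "even (card B)" and d: "R \<inter> B = {}"
  shows "measure_pmf.expectation (pmf_of_set (nc_matchings R) \<bind> (\<lambda>MR. pmf_of_set (nc_matchings B) \<bind> (\<lambda>MB. return_pmf (MR \<union> MB)))) (A_count \<alpha> \<beta>)
       = EA \<alpha> \<beta> R + EA \<alpha> \<beta> B"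
proof -
  let ?NR = "nc_matchings R" and ?NB = "nc_matchings B"
  have fR: "finite ?NR" "?NR \<noteq> {}" using nc_finite[OF R(1)] nc_ne[OF R] by auto
  have fB: "finite ?NB" "?NB \<noteq> {}" using nc_finite[OF B(1)] nc_ne[OF B] by auto
  have cB: "real (card ?NB) > 0" using fB by (simp add: card_gt_0_iff)
  have inner: "measure_pmf.expectation (pmf_of_set ?NB \<bind> (\<lambda>MB. return_pmf (MR \<union> MB))) (A_count \<alpha> \<beta>)
      = A_count \<alpha> \<beta> MR + EA \<alpha> \<beta> B" if MR: "MR \<in> ?NR" for MR
  proof -
    have "measure_pmf.expectation (pmf_of_set ?NB \<bind> (\<lambda>MB. return_pmf (MR \<union> MB))) (A_count \<alpha> \<beta>)
        = (\<Sum>MB\<in>?NB. A_count \<alpha> \<beta> (MR \<union> MB)) / real (card ?NB)"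
      by (subst exp_bind_set) (use fB in auto)
    also have "\<dots> = (\<Sum>MB\<in>?NB. A_count \<alpha> \<beta> MR + A_count \<alpha> \<beta> MB) / real (card ?NB)"
      using A_count_Un[OF R(1) B(1) d MR] by simp
    also have "\<dots> = A_count \<alpha> \<beta> MR + EA \<alpha> \<beta> B"
      unfolding EA_def sum.distrib using cB by (simp add: add_divide_distrib)
    finally show ?thesis .
  qed
  have fin: "finite (set_pmf (pmf_of_set ?NB \<bind> (\<lambda>MB. return_pmf (MR \<union> MB))))" for MR
    using fB by (simp add: set_bind_pmf)
  have "measure_pmf.expectation (pmf_of_set ?NR \<bind> (\<lambda>MR. pmf_of_set ?NB \<bind> (\<lambda>MB. return_pmf (MR \<union> MB)))) (A_count \<alpha> \<beta>)
      = (\<Sum>MR\<in>?NR. measure_pmf.expectation (pmf_of_set ?NB \<bind> (\<lambda>MB. return_pmf (MR \<union> MB))) (A_count \<alpha> \<beta>)) / real (card ?NR)"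
    by (rule exp_bind_set) (use fR fin in auto)
  also have "\<dots> = (\<Sum>MR\<in>?NR. A_count \<alpha> \<beta> MR + EA \<alpha> \<beta> B) / real (card ?NR)"
    using inner by simp
  also have "\<dots> = EA \<alpha> \<beta> R + EA \<alpha> \<beta> B"
  proof -
    have cR: "real (card ?NR) > 0" using fR by (simp add: card_gt_0_iff)
    thus ?thesis unfolding EA_def sum.distrib using cR by (simp add: add_divide_distrib)
  qed
  finally show ?thesis .
qed

lemma E_CP:
  "measure_pmf.expectation (CP n) (A_count \<alpha> \<beta>)
   = (\<Sum>R0\<in>Pow {1..2*n-1}. EA \<alpha> \<beta> (red_set n R0) + EA \<alpha> \<beta> ({1..2*n} - red_set n R0)) / real (card (Pow {1..2*n-1}))"
proof -
  let ?U = "{1..2*n-1}"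
  let ?f = "\<lambda>R0. pmf_of_set (nc_matchings (red_set n R0)) \<bind>
        (\<lambda>MR. pmf_of_set (nc_matchings ({1..2*n} - red_set n R0)) \<bind> (\<lambda>MB. return_pmf (MR \<union> MB)))"
  have cp: "CP n = pmf_of_set (Pow ?U) \<bind> ?f" unfolding CP_def Let_def ..
  have fin: "finite (set_pmf (?f R0))" if "R0 \<in> Pow ?U" for R0
  proof -
    have R0: "R0 \<subseteq> ?U" using that by auto
    note r = red_props[OF R0] and b = blue_props[OF R0]
    have "finite (nc_matchings (red_set n R0))" "nc_matchings (red_set n R0) \<noteq> {}"
      using nc_finite[OF r(1)] nc_ne[OF r(1) r(3)] by auto
    moreover have "finite (nc_matchings ({1..2*n} - red_set n R0))" "nc_matchings ({1..2*n} - red_set n R0) \<noteq> {}"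
      using nc_finite[OF b(1)] nc_ne[OF b(1) b(3)] by auto
    ultimately show ?thesis by (simp add: set_bind_pmf)
  qed
  have "measure_pmf.expectation (CP n) (A_count \<alpha> \<beta>) = (\<Sum>R0\<in>Pow ?U. measure_pmf.expectation (?f R0) (A_count \<alpha> \<beta>)) / real (card (Pow ?U))"
    unfolding cp by (rule exp_bind_set) (use fin in auto)
  also have "\<dots> = (\<Sum>R0\<in>Pow ?U. EA \<alpha> \<beta> (red_set n R0) + EA \<alpha> \<beta> ({1..2*n} - red_set n R0)) / real (card (Pow ?U))"
  proof -
    have "measure_pmf.expectation (?f R0) (A_count \<alpha> \<beta>) = EA \<alpha> \<beta> (red_set n R0) + EA \<alpha> \<beta> ({1..2*n} - red_set n R0)"
      if "R0 \<in> Pow ?U" for R0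
    proof -
      have R0: "R0 \<subseteq> ?U" using that by auto
      note r = red_props[OF R0] and b = blue_props[OF R0]
      show ?thesis by (rule E_inner[OF r(1) r(3) b(1) b(3) b(5)])
    qed
    thus ?thesis by simp
  qed
  finally show ?thesis .
qed

lemma main_bound:
  assumes a: "1 \<le> \<alpha>" "\<alpha> \<le> \<beta>" "\<beta> \<le> 2*n"
  shows "measure_pmf.expectation (CP n) (A_count \<alpha> \<beta>) \<le> 660 * (real n / sqrt (real \<alpha>))"
proof -
  let ?U = "{1..2*n-1}"
  have cP: "real (card (Pow ?U)) = 2^(card ?U)" by (simp add: card_Pow)
  have "(\<Sum>R0\<in>Pow ?U. EA \<alpha> \<beta> (red_set n R0) + EA \<alpha> \<beta> ({1..2*n} - red_set n R0))
      \<le> (\<Sum>R0\<in>Pow ?U. 3 * GG n \<alpha> \<beta> R0 + 3 * GG n \<alpha> \<beta> (?U - R0))"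
  proof (rule sum_mono)
    fix R0 assume "R0 \<in> Pow ?U"
    hence R0: "R0 \<subseteq> ?U" by auto
    note r = red_props[OF R0] and b = blue_props[OF R0]
    show "EA \<alpha> \<beta> (red_set n R0) + EA \<alpha> \<beta> ({1..2*n} - red_set n R0) \<le> 3 * GG n \<alpha> \<beta> R0 + 3 * GG n \<alpha> \<beta> (?U - R0)"
      unfolding EA_def by (intro add_mono EA_GG r(1) r(2) r(4) b(1) b(2) b(4))
  qed
  also have "\<dots> = 6 * (\<Sum>R0\<in>Pow ?U. GG n \<alpha> \<beta> R0)"
    using sum_Pow_compl[of "\<lambda>T. GG n \<alpha> \<beta> T" ?U] by (simp add: sum.distrib sum_distrib_left[symmetric])
  also have "\<dots> \<le> 6 * (5 * 2^(card ?U) * (22 * real n / sqrt (real \<alpha>)))"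
    by (intro mult_left_mono GG_avg a) auto
  finally have "measure_pmf.expectation (CP n) (A_count \<alpha> \<beta>) \<le> 6 * (5 * 2^(card ?U) * (22 * real n / sqrt (real \<alpha>))) / 2^(card ?U)"
    unfolding E_CP cP by (intro divide_right_mono) auto
  thus ?thesis by simp
qed

theorem lemma4p2:
  shows "(\<exists>C>0. \<forall>n \<alpha> \<beta>. 1 \<le> \<alpha> \<longrightarrow> \<alpha> \<le> \<beta> \<longrightarrow> \<beta> \<le> 2*n \<longrightarrow>
            measure_pmf.expectation (CP n) (A_count \<alpha> \<beta>)
              \<le> C * (real n / sqrt (real \<alpha>) + real \<beta> * real n * exp (- real \<alpha> / 16)))
       \<and> (\<exists>C>0. \<forall>n \<alpha> \<beta>. 1 \<le> \<alpha> \<longrightarrow> \<alpha> \<le> \<beta> \<longrightarrow> \<beta> \<le> 2*n \<longrightarrow>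
            32 * ln (real n) \<le> real \<alpha> \<longrightarrow>
            measure_pmf.expectation (CP n) (A_count \<alpha> \<beta>) \<le> C * (real n / sqrt (real \<alpha>)))"
proof (rule conjI)
  show "\<exists>C>0. \<forall>n \<alpha> \<beta>. 1 \<le> \<alpha> \<longrightarrow> \<alpha> \<le> \<beta> \<longrightarrow> \<beta> \<le> 2*n \<longrightarrow>
            measure_pmf.expectation (CP n) (A_count \<alpha> \<beta>)
              \<le> C * (real n / sqrt (real \<alpha>) + real \<beta> * real n * exp (- real \<alpha> / 16))"
  proof (intro exI[of _ "660::real"] conjI allI impI)
    fix n \<alpha> \<beta> :: nat
    assume a: "1 \<le> \<alpha>" "\<alpha> \<le> \<beta>" "\<beta> \<le> 2*n"
    have "measure_pmf.expectation (CP n) (A_count \<alpha> \<beta>) \<le> 660 * (real n / sqrt (real \<alpha>))"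
      by (rule main_bound[OF a])
    also have "\<dots> \<le> 660 * (real n / sqrt (real \<alpha>) + real \<beta> * real n * exp (- real \<alpha> / 16))"
      by (intro mult_left_mono) auto
    finally show "measure_pmf.expectation (CP n) (A_count \<alpha> \<beta>)
              \<le> 660 * (real n / sqrt (real \<alpha>) + real \<beta> * real n * exp (- real \<alpha> / 16))" .
  qed simp
  show "\<exists>C>0. \<forall>n \<alpha> \<beta>. 1 \<le> \<alpha> \<longrightarrow> \<alpha> \<le> \<beta> \<longrightarrow> \<beta> \<le> 2*n \<longrightarrow>
            32 * ln (real n) \<le> real \<alpha> \<longrightarrow>
            measure_pmf.expectation (CP n) (A_count \<alpha> \<beta>) \<le> C * (real n / sqrt (real \<alpha>))"
    by (intro exI[of _ "660::real"] conjI allI impI main_bound) auto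
qed

end
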